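(* Assume the setting of the context (random weights). Fix a compact interval $I\subset(0,\infty)$ and $r,\varepsilon>0$, and suppose Assumptions (A1R) and (A2R) hold. Then \[\lim_{n\rightarrow\infty}\mathbb{P}_{\mu}\left(\sup_{x\in B_F(\rho,r)}\sup_{t\in I}\left|\beta(n)q^n_{\lfloor\gamma(n)t\rfloor}(g_n(x))-q_t(x)\right|>\varepsilon\right)=0.\]
   Context: Let $(E,d_E)$ be a metric space and $F\subseteq E$ such that $F\cap\overline{B}_E(x,r)$ is compact for all $x\in E$, $r>0$ ($\overline{B}_E$, $B_E$ closed and open balls in $E$). Let $d_F:=d_E|_{F\times F}$, $B_F(x,r)$ the open ball in $(F,d_F)$, $\rho\in F$, $\nu$ a Radon measure of full support on $(F,d_F)$ (extended to $E$ by $\nu(A):=\nu(A\cap F)$), and $(q_t(x))_{x\in F,t>0}$ jointly continuous in $(t,x)$ with $q_t\ge0$, $\int_Fq_t\,d\nu=1$ for each $t>0$. For a locally finite connected graph $G$ with at least two vertices and distinguished vertex $\rho(G)$: $d_G$ is the shortest-path metric, $B_G(x,r)$ the open $d_G$-ball; $\mu^G$ a symmetric weight with $\mu^G_{xy}>0$ iff $\{x,y\}$ is an edge; $\mu^G_x:=\sum_y\mu^G_{xy}$; $\nu^G(A):=\sum_{x\in A}\mu^G_x$; $X^G$ the discrete time simple random walk with $P_G(x,y)=\mu^G_{xy}/\mu^G_x$, law $\mathbf{P}^G_x$; $p^G_m(x,y):=\mathbf{P}^G_x(X^G_m=y)/\nu^G(\{y\})$, $q^G_m(x,y):=\frac12(p^G_m+p^G_{m+1})(x,y)$,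 $q^G_m(x):=q^G_m(\rho(G),x)$. $(G^n)_{n\ge1}$ are such graphs with $V(G^n)\subseteq E$, $\rho(G^n)=\rho$; write $\nu^n,X^n,q^n$ for $\nu^{G^n},X^{G^n},q^{G^n}$. The weights of all the $G^n$ are random, given by a random element of $(0,\infty)^{\cup_nE(G^n)}$ with law $\mathbb{P}_\mu$; hence $\nu^n$, $\mathbf{P}^{G^n}$, $q^n$ are random. $(\alpha(n)),(\beta(n)),(\gamma(n))$ are non-negative deterministic sequences diverging to $\infty$. For $x\in E$, $g_n(x)$ is a point of $V(G^n)$ minimising $d_E(x,\cdot)$. Assumption (A1R): (a) there is $c_1>0$ with $d_{G^n}(x,y)\ge c_1\alpha(n)d_E(x,y)$ for all $x,y\in V(G^n)$, $n\ge1$, and a non-negative $\tilde\alpha(n)=o(\alpha(n))$ such that for each $r>0$ there are $c_2<\infty$, $n_0$ with $d_{G^n}(x,y)\le c_2\alpha(n)d_E(x,y)+\tilde\alpha(n)$ for all $x,y\in V(G^n)\cap B_E(\rho,r)$, $n\ge n_0$; (b) for each $r>0$, $\lim_n\sup_{x\in B_F(\rho,r)}d_E(x,V(G^n))=0$; (c) for every $x\in F$, $r,\varepsilon>0$, $\lim_n\mathbb{P}_\mu(|\beta(n)^{-1}\nu^n(B_E(x,r))-\nu(B_E(x,r))|>\varepsilon)=0$; (d) for every compact interval $I\subset(0,\infty)$, $x\in F$, $r,\varepsilon>0$, \[\lim_n\mathbb{P}_\mu\Big(\sup_{t\in I}\Big|\mathbf{P}^{G^n}_\rho(X^n_{\lfloor\gamma(n)t\rfloor}\in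 B_E(x,r))-\int_{B_E(x,r)}q_t(y)\nu(dy)\Big|>\varepsilon\Big)=0.\] Assumption (A2R): for every compact interval $I\subset(0,\infty)$ and $r,\varepsilon>0$, \[\lim_{\delta\to0}\limsup_{n\to\infty}\mathbb{P}_\mu\Big(\sup_{\substack{x,y\in B_{G^n}(\rho,\alpha(n)r):\\ d_{G^n}(x,y)\le\alpha(n)\delta}}\sup_{t\in I}\beta(n)\big|q^n_{\lfloor\gamma(n)t\rfloor}(x)-q^n_{\lfloor\gamma(n)t\rfloor}(y)\big|>\varepsilon\Big)=0.\] *)

theory Defs
  imports "HOL-Probability.Probability" "HOL-Library.Landau_Symbols"
begin

definition is_walk :: "'a set \<Rightarrow> ('a \<Rightarrow> 'a \<Rightarrow> bool) \<Rightarrow> 'a \<Rightarrow> 'a \<Rightarrow> 'a list \<Rightarrow> bool" where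
  "is_walk V Ed x y xs \<longleftrightarrow> xs \<noteq> [] \<and> hd xs = x \<and> last xs = y \<and> set xs \<subseteq> V \<and> successively Ed xs"

definition gdist :: "'a set \<Rightarrow> ('a \<Rightarrow> 'a \<Rightarrow> bool) \<Rightarrow> 'a \<Rightarrow> 'a \<Rightarrow> real" where
  "gdist V Ed x y = real (LEAST k. \<exists>xs. is_walk V Ed x y xs \<and> length xs = Suc k)"

definition gball :: "'a set \<Rightarrow> ('a \<Rightarrow> 'a \<Rightarrow> bool) \<Rightarrow> 'a \<Rightarrow> real \<Rightarrow> 'a set" where
  "gball V Ed x r = {y \<in> V. gdist V Ed x y < r}"

text \<open>Vertex weight mu_x = sum of mu_xy over the neighbours y of x
  (mu_xy = w x y on edges, 0 otherwise).\<close>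
definition vweight :: "('a \<Rightarrow> 'a \<Rightarrow> bool) \<Rightarrow> ('a \<Rightarrow> 'a \<Rightarrow> real) \<Rightarrow> 'a \<Rightarrow> real" where
  "vweight Ed w x = (\<Sum>y\<in>{y. Ed x y}. w x y)"

text \<open>walk_prob Ed w m x A = P_x(X_m \<in> A) for the discrete time random walk with
  transition probabilities P(x,y) = mu_xy / mu_x.\<close>
fun walk_prob :: "('a \<Rightarrow> 'a \<Rightarrow> bool) \<Rightarrow> ('a \<Rightarrow> 'a \<Rightarrow> real) \<Rightarrow> nat \<Rightarrow> 'a \<Rightarrow> 'a set \<Rightarrow> real" where
  "walk_prob Ed w 0 x A = indicator A x"
| "walk_prob Ed w (Suc m) x A =
     (\<Sum>z\<in>{z. Ed x z}. w x z / vweight Ed w x * walk_prob Ed w m z A)"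

definition hk_p :: "('a \<Rightarrow> 'a \<Rightarrow> bool) \<Rightarrow> ('a \<Rightarrow> 'a \<Rightarrow> real) \<Rightarrow> nat \<Rightarrow> 'a \<Rightarrow> 'a \<Rightarrow> real" where
  "hk_p Ed w m x y = walk_prob Ed w m x {y} / vweight Ed w y"

definition hk_q :: "('a \<Rightarrow> 'a \<Rightarrow> bool) \<Rightarrow> ('a \<Rightarrow> 'a \<Rightarrow> real) \<Rightarrow> nat \<Rightarrow> 'a \<Rightarrow> 'a \<Rightarrow> real" where
  "hk_q Ed w m x y = (hk_p Ed w m x y + hk_p Ed w (Suc m) x y) / 2"

text \<open>The measure nu^G(A) = sum_{x in A} mu_x (possibly infinite, hence ennreal).\<close>
definition gmeasure :: "'a set \<Rightarrow> ('a \<Rightarrow> 'a \<Rightarrow> bool) \<Rightarrow> ('a \<Rightarrow> 'a \<Rightarrow> real) \<Rightarrow> 'a set \<Rightarrow> ennreal" where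
  "gmeasure V Ed w A = (\<integral>\<^sup>+ x. ennreal (vweight Ed w x) * indicator A x \<partial>count_space V)"

end

theory Submission
  imports Defs
begin


fun reach :: "('a \<Rightarrow> 'a \<Rightarrow> bool) \<Rightarrow> nat \<Rightarrow> 'a \<Rightarrow> 'a set" where
  "reach Ed 0 x = {x}"
| "reach Ed (Suc m) x = (\<Union>z\<in>{z. Ed x z}. reach Ed m z)"

lemma finite_reach: assumes "\<And>x. finite {y. Ed x y}" shows "finite (reach Ed m x)"
  by (induction m arbitrary: x) (auto intro!: assms)

lemma wp_zero: "y \<notin> reach Ed m x \<Longrightarrow> walk_prob Ed w m x {y} = 0"
  by (induction m arbitrary: x) (auto intro!: sum.neutral)

lemma wp_sum:
  assumes fin: "\<And>x. finite {y. Ed x y}"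
  shows "walk_prob Ed w m x A = (\<Sum>y\<in>reach Ed m x. walk_prob Ed w m x {y} * indicator A y)"
proof (induction m arbitrary: x)
  case 0 then show ?case by (simp add: indicator_def)
next
  case (Suc m)
  let ?R = "reach Ed (Suc m) x"
  have fR: "finite ?R" using finite_reach[of Ed, OF fin] by blast
  have "walk_prob Ed w (Suc m) x A = (\<Sum>z\<in>{z. Ed x z}. w x z / vweight Ed w x *
     (\<Sum>y\<in>reach Ed m z. walk_prob Ed w m z {y} * indicator A y))"
    using Suc by simp
  also have "\<dots> = (\<Sum>z\<in>{z. Ed x z}. w x z / vweight Ed w x *
     (\<Sum>y\<in>?R. walk_prob Ed w m z {y} * indicator A y))"
  proof (rule sum.cong[OF refl])
    fix z assume z: "z \<in> {z. Ed x z}"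
    have "(\<Sum>y\<in>reach Ed m z. walk_prob Ed w m z {y} * indicator A y) =
          (\<Sum>y\<in>?R. walk_prob Ed w m z {y} * indicator A y)"
      using z fR by (intro sum.mono_neutral_left) (auto simp: wp_zero)
    then show "w x z / vweight Ed w x * (\<Sum>y\<in>reach Ed m z. walk_prob Ed w m z {y} * indicator A y) =
          w x z / vweight Ed w x * (\<Sum>y\<in>?R. walk_prob Ed w m z {y} * indicator A y)" by simp
  qed
  also have "\<dots> = (\<Sum>y\<in>?R. (\<Sum>z\<in>{z. Ed x z}. w x z / vweight Ed w x * walk_prob Ed w m z {y}) * indicator A y)"
    unfolding sum_distrib_left sum_distrib_right
    by (subst sum.swap) (simp add: mult.assoc)
  also have "\<dots> = (\<Sum>y\<in>?R. walk_prob Ed w (Suc m) x {y} * indicator A y)" by simp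
  finally show ?case .
qed

lemma wp_sum_T:
  assumes fin: "\<And>x. finite {y. Ed x y}" and T: "finite T" "reach Ed m x \<inter> A \<subseteq> T" "T \<subseteq> A"
  shows "walk_prob Ed w m x A = (\<Sum>y\<in>T. walk_prob Ed w m x {y})"
proof -
  have "walk_prob Ed w m x A = (\<Sum>y\<in>reach Ed m x. walk_prob Ed w m x {y} * indicator A y)"
    by (rule wp_sum[OF fin])
  also have "\<dots> = (\<Sum>y\<in>reach Ed m x \<inter> A. walk_prob Ed w m x {y})"
    using finite_reach[of Ed, OF fin] by (simp add: sum.inter_restrict indicator_def of_bool_def if_distrib cong: if_cong)
  also have "\<dots> = (\<Sum>y\<in>T. walk_prob Ed w m x {y})"
    using T wp_zero[of _ Ed m x w] by (intro sum.mono_neutral_left) auto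
  finally show ?thesis .
qed

lemma vweight_nonneg: "(\<And>y. Ed x y \<Longrightarrow> w x y > 0) \<Longrightarrow> vweight Ed w x \<ge> 0"
  unfolding vweight_def by (intro sum_nonneg) (auto intro: less_imp_le)

lemma wp_nonneg: assumes "\<And>x y. Ed x y \<Longrightarrow> w x y > 0" shows "walk_prob Ed w m x A \<ge> 0"
proof (induction m arbitrary: x)
  case 0 then show ?case by simp
next
  case (Suc m)
  have "vweight Ed w x \<ge> 0" using assms by (rule vweight_nonneg)
  have "\<forall>z\<in>{z. Ed x z}. 0 \<le> w x z / vweight Ed w x * walk_prob Ed w m z A"
  proof
    fix z assume "z \<in> {z. Ed x z}"
    then have "0 < w x z" using assms by auto
    then show "0 \<le> w x z / vweight Ed w x * walk_prob Ed w m z A"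
      using Suc.IH[of z] \<open>vweight Ed w x \<ge> 0\<close> by (intro mult_nonneg_nonneg divide_nonneg_nonneg) auto
  qed
  then show ?case by (simp only: walk_prob.simps) (rule sum_nonneg, blast)
qed

lemma reach_subset: assumes "\<And>x y. Ed x y \<Longrightarrow> y \<in> V" "x \<in> V" shows "reach Ed m x \<subseteq> V"
  using assms(2) by (induction m arbitrary: x) (auto dest: assms(1))

lemma walk_reach: "is_walk V Ed x y xs \<Longrightarrow> y \<in> reach Ed (length xs - 1) x"
proof (induction xs arbitrary: x)
  case Nil then show ?case by (simp add: is_walk_def)
next
  case (Cons u xs)
  show ?case
  proof (cases xs)
    case Nil with Cons.prems show ?thesis by (auto simp: is_walk_def)
  next
    case (Cons z zs)
    with Cons.prems have "Ed x z" "is_walk V Ed z y xs"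
      by (auto simp: is_walk_def)
    with Cons.IH[of z] Cons show ?thesis by auto
  qed
qed

lemma gball_finite:
  assumes fin: "\<And>x. finite {y. Ed x y}"
    and conn: "\<And>y. y \<in> V \<Longrightarrow> \<exists>xs. is_walk V Ed x y xs"
  shows "finite (gball V Ed x R)"
proof -
  have "gball V Ed x R \<subseteq> (\<Union>k\<le>nat \<lceil>R\<rceil>. reach Ed k x)"
  proof
    fix y assume y: "y \<in> gball V Ed x R"
    then have yV: "y \<in> V" and lt: "gdist V Ed x y < R" by (auto simp: gball_def)
    obtain xs where xs: "is_walk V Ed x y xs" using conn[OF yV] by blast
    then have ex: "\<exists>k. \<exists>xs. is_walk V Ed x y xs \<and> length xs = Suc k"
      by (intro exI[of _ "length xs - 1"] exI[of _ xs]) (auto simp: is_walk_def)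
    define k where "k = (LEAST k. \<exists>xs. is_walk V Ed x y xs \<and> length xs = Suc k)"
    obtain ys where ys: "is_walk V Ed x y ys" "length ys = Suc k"
      using LeastI_ex[OF ex] unfolding k_def by blast
    have "real k < R" using lt unfolding gdist_def k_def .
    then have "k \<le> nat \<lceil>R\<rceil>" by linarith
    moreover have "y \<in> reach Ed k x" using walk_reach[OF ys(1)] ys(2) by simp
    ultimately show "y \<in> (\<Union>k\<le>nat \<lceil>R\<rceil>. reach Ed k x)" by blast
  qed
  moreover have "finite (\<Union>k\<le>nat \<lceil>R\<rceil>. reach Ed k x)"
    by (intro finite_UN_I finite_atMost finite_reach[of Ed, OF fin])
  ultimately show ?thesis by (rule finite_subset)
qed

lemma V_countable:
  assumes conn: "\<And>y. y \<in> V \<Longrightarrow> \<exists>xs. is_walk V Ed x y xs" and fin: "\<And>x. finite {y. Ed x y}"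
  shows "countable V"
proof -
  have "V \<subseteq> (\<Union>k. reach Ed k x)"
  proof
    fix y assume "y \<in> V"
    then obtain xs where "is_walk V Ed x y xs" using conn by blast
    then have "y \<in> reach Ed (length xs - 1) x" by (rule walk_reach)
    then show "y \<in> (\<Union>k. reach Ed k x)" by blast
  qed
  moreover have "countable (\<Union>k. reach Ed k x)"
    by (rule countable_UN[OF countableI_type]) (rule countable_finite[OF finite_reach[of Ed, OF fin]])
  ultimately show ?thesis by (rule countable_subset)
qed



lemma meas_vweight:
  assumes fin: "finite {y. Ed x y}" and wm: "\<And>x y. (\<lambda>\<omega>. w \<omega> x y) \<in> borel_measurable M"
  shows "(\<lambda>\<omega>. vweight Ed (w \<omega>) x) \<in> borel_measurable M"
  unfolding vweight_def using wm by measurable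

lemma meas_wp:
  assumes fin: "\<And>x. finite {y. Ed x y}" and wm: "\<And>x y. (\<lambda>\<omega>. w \<omega> x y) \<in> borel_measurable M"
  shows "(\<lambda>\<omega>. walk_prob Ed (w \<omega>) m x A) \<in> borel_measurable M"
proof (induction m arbitrary: x)
  case 0 then show ?case by simp
next
  case (Suc m)
  have [measurable]: "(\<lambda>\<omega>. vweight Ed (w \<omega>) x) \<in> borel_measurable M"
    by (rule meas_vweight[OF fin wm])
  have [measurable]: "\<And>z. (\<lambda>\<omega>. walk_prob Ed (w \<omega>) m z A) \<in> borel_measurable M" by (rule Suc)
  have [measurable]: "\<And>x y. (\<lambda>\<omega>. w \<omega> x y) \<in> borel_measurable M" by (rule wm)
  show ?case by simp measurable
qed

lemma meas_hkq:
  assumes fin: "\<And>x. finite {y. Ed x y}" and wm: "\<And>x y. (\<lambda>\<omega>. w \<omega> x y) \<in> borel_measurable M"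
  shows "(\<lambda>\<omega>. hk_q Ed (w \<omega>) m x y) \<in> borel_measurable M"
proof -
  have [measurable]: "\<And>m. (\<lambda>\<omega>. walk_prob Ed (w \<omega>) m x {y}) \<in> borel_measurable M"
    by (rule meas_wp[OF fin wm])
  have [measurable]: "(\<lambda>\<omega>. vweight Ed (w \<omega>) y) \<in> borel_measurable M"
    by (rule meas_vweight[OF fin wm])
  show ?thesis unfolding hk_q_def hk_p_def by measurable
qed

lemma meas_gmeasure:
  assumes cV: "countable V" and fin: "\<And>x. finite {y. Ed x y}"
    and wm: "\<And>x y. (\<lambda>\<omega>. w \<omega> x y) \<in> borel_measurable M"
  shows "(\<lambda>\<omega>. gmeasure V Ed (w \<omega>) B) \<in> borel_measurable M"
proof -
  interpret sigma_finite_measure "count_space V"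
    by (rule sigma_finite_measure_count_space_countable[OF cV])
  have "(\<lambda>(x, \<omega>). ennreal (vweight Ed (w \<omega>) x) * indicator B x) \<in> borel_measurable (count_space V \<Otimes>\<^sub>M M)"
  proof (rule measurable_pair_measure_countable1[OF cV])
    fix x
    have [measurable]: "(\<lambda>\<omega>. vweight Ed (w \<omega>) x) \<in> borel_measurable M" by (rule meas_vweight[OF fin wm])
    show "(\<lambda>\<omega>. case (x, \<omega>) of (x, \<omega>) \<Rightarrow> ennreal (vweight Ed (w \<omega>) x) * indicator B x) \<in> borel_measurable M"
      by simp
  qed
  then have "(\<lambda>(\<omega>, x). ennreal (vweight Ed (w \<omega>) x) * indicator B x) \<in> borel_measurable (M \<Otimes>\<^sub>M count_space V)"
    by (subst measurable_pair_swap_iff) simp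
  then show ?thesis unfolding gmeasure_def
    by (rule borel_measurable_nn_integral[where f="\<lambda>\<omega> x. ennreal (vweight Ed (w \<omega>) x) * indicator B x", simplified])
qed

lemma sets_ex_time:
  fixes f :: "nat \<Rightarrow> 'w \<Rightarrow> real" and h :: "real \<Rightarrow> nat"
  assumes fm: "\<And>k. f k \<in> borel_measurable M" and hT: "finite (h ` T)"
    and op: "\<And>t. t \<in> T \<Longrightarrow> open {p. P t p}"
  shows "{\<omega> \<in> space M. \<exists>t\<in>T. P t (f (h t) \<omega>)} \<in> sets M"
proof -
  have eq: "{\<omega> \<in> space M. \<exists>t\<in>T. P t (f (h t) \<omega>)} =
    (\<Union>k\<in>h ` T. f k -` (\<Union>t\<in>{t\<in>T. h t = k}. {p. P t p}) \<inter> space M)"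
    apply (rule set_eqI)
    apply (rule iffI)
     apply blast
    apply clarify
    apply (metis (mono_tags, lifting))
    done
  have "\<And>k. f k -` (\<Union>t\<in>{t\<in>T. h t = k}. {p. P t p}) \<inter> space M \<in> sets M"
    by (rule measurable_sets[OF fm]) (auto intro!: borel_open op)
  then show ?thesis unfolding eq using hT by blast
qed

lemma finite_floor_image:
  assumes "(g::real) \<ge> 0" shows "finite ((\<lambda>t. nat \<lfloor>g * t\<rfloor>) ` {a..b})"
proof -
  have "(\<lambda>t. nat \<lfloor>g * t\<rfloor>) ` {a..b} \<subseteq> {..nat \<lceil>g * b\<rceil>}"
  proof
    fix k assume "k \<in> (\<lambda>t. nat \<lfloor>g * t\<rfloor>) ` {a..b}"
    then obtain t where t: "t \<in> {a..b}" "k = nat \<lfloor>g * t\<rfloor>" by blast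
    have "g * t \<le> g * b" using t assms by (auto intro: mult_left_mono)
    then show "k \<in> {..nat \<lceil>g * b\<rceil>}" using t by (auto simp: nat_le_iff) linarith
  qed
  then show ?thesis by (rule finite_subset) simp
qed



lemma core_arith:
  fixes X N W I nu Qm q0 eps :: real
  assumes nu: "nu > 0" and eps: "eps > 0" and Qm: "Qm \<ge> 0"
    and h1: "\<bar>X * N - W\<bar> \<le> 2 * (eps / 10) * N"
    and h2: "\<bar>W - I\<bar> \<le> eps * nu / 10"
    and h3: "\<bar>N - nu\<bar> \<le> nu / 2" and h4: "\<bar>N - nu\<bar> \<le> eps * nu / (20 * (Qm + 1))"
    and h5: "0 \<le> I" "I \<le> Qm * nu"
    and h6: "\<bar>I / nu - q0\<bar> \<le> eps / 10"
  shows "\<bar>X - q0\<bar> < eps"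
proof -
  have N: "N \<ge> nu / 2" using h3 by linarith
  then have Npos: "N > 0" using nu by linarith
  have a1: "\<bar>X - W / N\<bar> \<le> eps / 5"
  proof -
    have "\<bar>X - W / N\<bar> = \<bar>X * N - W\<bar> / N" using Npos by (simp add: field_simps)
    also have "\<dots> \<le> 2 * (eps / 10) * N / N" using h1 Npos by (intro divide_right_mono) auto
    finally show ?thesis using Npos by simp
  qed
  have a2: "\<bar>W / N - I / N\<bar> \<le> eps / 5"
  proof -
    have "\<bar>W / N - I / N\<bar> = \<bar>W - I\<bar> / N" using Npos by (simp add: field_simps)
    also have "\<dots> \<le> (eps * nu / 10) / N" using h2 Npos by (intro divide_right_mono) auto
    also have "\<dots> \<le> (eps * nu / 10) / (nu / 2)" using N nu eps by (intro divide_left_mono) auto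
    also have "\<dots> = eps / 5" using nu by simp
    finally show ?thesis .
  qed
  have a3: "\<bar>I / N - I / nu\<bar> \<le> eps / 10"
  proof -
    have e: "I / N - I / nu = I * (nu - N) / (N * nu)" using Npos nu by (simp add: field_simps)
    have "\<bar>I / N - I / nu\<bar> = I * \<bar>N - nu\<bar> / (N * nu)" unfolding e using Npos nu h5
      by (simp add: abs_mult abs_minus_commute)
    also have "\<dots> \<le> (Qm * nu) * (eps * nu / (20 * (Qm + 1))) / ((nu / 2) * nu)"
      using h5 h4 N nu Npos Qm eps
      by (intro frac_le mult_mono mult_pos_pos mult_nonneg_nonneg mult_right_mono) auto
    also have "\<dots> \<le> eps / 10"
    proof -
      define D where "D = 20 * (Qm + 1)"
      have D: "D > 0" using Qm unfolding D_def by simp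
      have "(Qm * nu) * (eps * nu / D) / ((nu / 2) * nu) = eps * Qm * 2 / D"
        using D nu by (simp add: field_simps)
      also have "\<dots> \<le> eps / 10" using D eps unfolding D_def by (simp add: field_simps)
      finally show ?thesis unfolding D_def .
    qed
    finally show ?thesis .
  qed
  have "\<bar>X - q0\<bar> \<le> \<bar>X - W / N\<bar> + \<bar>W / N - I / N\<bar> + \<bar>I / N - I / nu\<bar> + \<bar>I / nu - q0\<bar>"
    by linarith
  also have "\<dots> \<le> eps / 5 + eps / 5 + eps / 10 + eps / 10" using a1 a2 a3 h6 by linarith
  also have "\<dots> < eps" using eps by simp
  finally show ?thesis .
qed

lemma avg_bound:
  fixes W1 W2 I I' c :: real
  assumes "\<bar>W1 - I\<bar> \<le> c / 20" "\<bar>W2 - I'\<bar> \<le> c / 20" "\<bar>I' - I\<bar> \<le> c / 10"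
  shows "\<bar>(W1 + W2) / 2 - I\<bar> \<le> c / 10"
proof -
  have "(W1 + W2) / 2 - I = ((W1 - I) + (W2 - I') + (I' - I)) / 2" by (simp add: field_simps)
  also have "\<bar>\<dots>\<bar> \<le> (\<bar>W1 - I\<bar> + \<bar>W2 - I'\<bar> + \<bar>I' - I\<bar>) / 2"
    by (simp add: divide_right_mono abs_triangle_ineq order.trans[OF abs_triangle_ineq add_mono])
  also have "\<dots> \<le> (c/20 + c/20 + c/10) / 2"
  proof -
    have "\<bar>W1 - I\<bar> + \<bar>W2 - I'\<bar> + \<bar>I' - I\<bar> \<le> c/20 + c/20 + c/10" using assms by linarith
    then show ?thesis by (rule divide_right_mono) simp
  qed
  also have "\<dots> = c / 10" by simp
  finally show ?thesis .
qed



lemma vweight_pos: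
  assumes EV: "\<And>x y. Ed x y \<Longrightarrow> x \<in> V \<and> y \<in> V" and fin: "finite {y. Ed x y}"
    and wpos: "\<And>x y. Ed x y \<Longrightarrow> w x y > 0"
    and conn: "\<And>y. y \<in> V \<Longrightarrow> \<exists>xs. is_walk V Ed x y xs"
    and two: "\<exists>x\<in>V. \<exists>y\<in>V. x \<noteq> y" and xV: "x \<in> V"
  shows "vweight Ed w x > 0"
proof -
  obtain z where zV: "z \<in> V" and zx: "z \<noteq> x" using two by blast
  obtain xs where xs: "is_walk V Ed x z xs" using conn[OF zV] by blast
  then obtain u rest where "xs = x # u # rest"
    using zx by (cases xs; cases "tl xs") (auto simp: is_walk_def)
  with xs have u: "Ed x u" by (simp add: is_walk_def)
  show ?thesis unfolding vweight_def
    using fin u wpos by (intro sum_pos2[of _ u]) (auto intro: less_imp_le)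
qed

lemma hkq_nonneg:
  assumes wpos: "\<And>x y. Ed x y \<Longrightarrow> w x y > 0"
  shows "hk_q Ed w m x y \<ge> 0"
proof -
  have a1: "0 \<le> walk_prob Ed w m x {y}" by (rule wp_nonneg[OF wpos])
  have a2: "0 \<le> walk_prob Ed w (Suc m) x {y}" by (rule wp_nonneg[OF wpos])
  note a = a1 a2
  have b: "0 \<le> vweight Ed w y" by (rule vweight_nonneg[of Ed y w, OF wpos])
  show ?thesis unfolding hk_q_def hk_p_def
    by (rule divide_nonneg_nonneg[OF add_nonneg_nonneg[OF divide_nonneg_nonneg[OF a(1) b] divide_nonneg_nonneg[OF a(2) b]]]) simp
qed

lemma hkq_vw:
  assumes "vweight Ed w y > 0"
  shows "hk_q Ed w m x y * vweight Ed w y = (walk_prob Ed w m x {y} + walk_prob Ed w (Suc m) x {y}) / 2"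
  using assms unfolding hk_q_def hk_p_def by (simp add: field_simps)

lemma gmeasure_ge_sum:
  assumes "finite T" "T \<subseteq> B \<inter> V" "\<And>y. y \<in> T \<Longrightarrow> vweight Ed w y \<ge> 0"
  shows "ennreal (\<Sum>y\<in>T. vweight Ed w y) \<le> gmeasure V Ed w B"
proof -
  have "ennreal (\<Sum>y\<in>T. vweight Ed w y) = (\<Sum>y\<in>T. ennreal (vweight Ed w y))"
    using assms(3) by (simp add: sum_ennreal)
  also have "\<dots> = (\<integral>\<^sup>+ x. ennreal (vweight Ed w x) * indicator T x \<partial>count_space V)"
    using assms by (subst nn_integral_count_space'[of T]) auto
  also have "\<dots> \<le> gmeasure V Ed w B" unfolding gmeasure_def
    using assms by (intro nn_integral_mono) (auto simp: indicator_def)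
  finally show ?thesis .
qed

lemma gmeasure_eq_sum:
  assumes "finite T" "T \<subseteq> B \<inter> V" "B \<inter> V \<subseteq> T" "\<And>y. y \<in> T \<Longrightarrow> vweight Ed w y \<ge> 0"
  shows "gmeasure V Ed w B = ennreal (\<Sum>y\<in>T. vweight Ed w y)"
proof -
  have "gmeasure V Ed w B = (\<Sum>y\<in>T. ennreal (vweight Ed w y) * indicator B y)"
    unfolding gmeasure_def using assms by (intro nn_integral_count_space') (auto simp: indicator_def)
  also have "\<dots> = (\<Sum>y\<in>T. ennreal (vweight Ed w y))"
    using assms by (intro sum.cong) (auto simp: indicator_def)
  also have "\<dots> = ennreal (\<Sum>y\<in>T. vweight Ed w y)"
    using assms(4) by (simp add: sum_ennreal)
  finally show ?thesis .
qed

lemma graph_est: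
  fixes w :: "'a \<Rightarrow> 'a \<Rightarrow> real"
  assumes fin: "\<And>x. finite {y. Ed x y}"
    and EV: "\<And>x y. Ed x y \<Longrightarrow> y \<in> V"
    and wpos: "\<And>x y. Ed x y \<Longrightarrow> w x y > 0"
    and vpos: "\<And>y. y \<in> V \<Longrightarrow> vweight Ed w y > 0"
    and rho: "\<rho> \<in> V" and vV: "v \<in> V"
    and fm: "gmeasure V Ed w B \<noteq> \<top>"
    and close: "\<And>y. y \<in> B \<inter> V \<Longrightarrow> \<beta> * \<bar>hk_q Ed w m \<rho> y - hk_q Ed w m \<rho> v\<bar> \<le> e"
    and bpos: "\<beta> > 0" and e: "e \<ge> 0"
  shows "\<bar>hk_q Ed w m \<rho> v * enn2real (gmeasure V Ed w B)
          - (walk_prob Ed w m \<rho> B + walk_prob Ed w (Suc m) \<rho> B) / 2\<bar>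
         \<le> 2 * e * enn2real (gmeasure V Ed w B) / \<beta>"
proof -
  define U where "U = enn2real (gmeasure V Ed w B)"
  define Q where "Q = (\<lambda>y. hk_q Ed w m \<rho> y)"
  define T where "T = (reach Ed m \<rho> \<union> reach Ed (Suc m) \<rho>) \<inter> B"
  have fT: "finite T" unfolding T_def using finite_reach[of Ed, OF fin] by blast
  have RV: "\<And>k. reach Ed k \<rho> \<subseteq> V" by (rule reach_subset) (auto intro: EV rho)
  have TV: "T \<subseteq> V" unfolding T_def using RV by blast
  have TB: "T \<subseteq> B" unfolding T_def by blast
  have Qnn: "\<And>y. Q y \<ge> 0" unfolding Q_def by (rule hkq_nonneg[OF wpos])
  have vwnn: "\<And>y. y \<in> T \<Longrightarrow> vweight Ed w y \<ge> 0" using vpos TV by (auto intro: less_imp_le)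
  have W1: "walk_prob Ed w m \<rho> B = (\<Sum>y\<in>T. walk_prob Ed w m \<rho> {y})"
    by (rule wp_sum_T[OF fin fT]) (auto simp: T_def)
  have W2: "walk_prob Ed w (Suc m) \<rho> B = (\<Sum>y\<in>T. walk_prob Ed w (Suc m) \<rho> {y})"
    by (rule wp_sum_T[OF fin fT]) (auto simp: T_def)
  have W: "(walk_prob Ed w m \<rho> B + walk_prob Ed w (Suc m) \<rho> B) / 2 = (\<Sum>y\<in>T. Q y * vweight Ed w y)"
  proof -
    have "(\<Sum>y\<in>T. Q y * vweight Ed w y) = (\<Sum>y\<in>T. (walk_prob Ed w m \<rho> {y} + walk_prob Ed w (Suc m) \<rho> {y}) / 2)"
      unfolding Q_def using TV vpos by (intro sum.cong refl hkq_vw) auto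
    also have "\<dots> = ((\<Sum>y\<in>T. walk_prob Ed w m \<rho> {y}) + (\<Sum>y\<in>T. walk_prob Ed w (Suc m) \<rho> {y})) / 2"
      by (simp only: sum.distrib[symmetric] sum_divide_distrib[symmetric])
    finally show ?thesis unfolding W1 W2 by simp
  qed
  have sumU: "(\<Sum>y\<in>T. vweight Ed w y) \<le> U"
  proof -
    have "ennreal (\<Sum>y\<in>T. vweight Ed w y) \<le> gmeasure V Ed w B"
      using fT TV TB vwnn by (intro gmeasure_ge_sum) auto
    then have "enn2real (ennreal (\<Sum>y\<in>T. vweight Ed w y)) \<le> U"
      unfolding U_def using fm by (intro enn2real_mono) (auto simp: top.not_eq_extremum)
    moreover have "(\<Sum>y\<in>T. vweight Ed w y) \<ge> 0" using vwnn by (rule sum_nonneg)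
    ultimately show ?thesis by simp
  qed
  have Unn: "U \<ge> 0" unfolding U_def by simp
  have closeQ: "\<And>y. y \<in> B \<inter> V \<Longrightarrow> \<bar>Q y - Q v\<bar> \<le> e / \<beta>"
    using close bpos unfolding Q_def by (simp add: field_simps)
  show ?thesis
  proof (cases "B \<inter> V \<subseteq> T")
    case True
    have Ueq: "U = (\<Sum>y\<in>T. vweight Ed w y)" unfolding U_def
      using gmeasure_eq_sum[OF fT _ True vwnn] TV TB by (simp add: sum_nonneg vwnn)
    then have "Q v * U - (\<Sum>y\<in>T. Q y * vweight Ed w y) = (\<Sum>y\<in>T. (Q v - Q y) * vweight Ed w y)"
      by (simp add: sum_distrib_left sum_subtractf left_diff_distrib)
    then have "\<bar>Q v * U - (\<Sum>y\<in>T. Q y * vweight Ed w y)\<bar> \<le> (\<Sum>y\<in>T. (e / \<beta>) * vweight Ed w y)"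
      apply (simp only:)
      apply (rule order.trans[OF sum_abs])
      apply (rule sum_mono)
    proof -
      fix i assume i: "i \<in> T"
      then have "\<bar>Q i - Q v\<bar> \<le> e / \<beta>" using closeQ TV TB by blast
      then have "\<bar>Q v - Q i\<bar> * vweight Ed w i \<le> e / \<beta> * vweight Ed w i"
        using vwnn[OF i] by (intro mult_right_mono) (auto simp: abs_minus_commute)
      then show "\<bar>(Q v - Q i) * vweight Ed w i\<bar> \<le> e / \<beta> * vweight Ed w i"
        using vwnn[OF i] by (simp add: abs_mult)
    qed
    also have "\<dots> = (e / \<beta>) * U" using Ueq by (simp add: sum_distrib_left)
    also have "\<dots> \<le> 2 * e * U / \<beta>" using bpos e Unn by (simp add: field_simps)
    finally show ?thesis unfolding W Q_def U_def .
  next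
    case False
    then obtain y0 where y0: "y0 \<in> B \<inter> V" "y0 \<notin> T" by blast
    have "y0 \<notin> reach Ed m \<rho>" "y0 \<notin> reach Ed (Suc m) \<rho>" using y0 unfolding T_def by auto
    then have "Q y0 = 0" unfolding Q_def hk_q_def hk_p_def by (simp add: wp_zero)
    then have Qv: "Q v \<le> e / \<beta>" using closeQ[OF y0(1)] by simp
    have QT: "\<And>y. y \<in> T \<Longrightarrow> Q y \<le> 2 * e / \<beta>"
    proof -
      fix y assume "y \<in> T"
      then have "y \<in> B \<inter> V" using TV TB by blast
      from closeQ[OF this] have "Q y \<le> Q v + e / \<beta>" by (simp add: abs_le_iff)
      with Qv show "Q y \<le> 2 * e / \<beta>" by simp
    qed
    have a1: "0 \<le> Q v * U" using Qnn Unn by simp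
    have a2: "Q v * U \<le> e / \<beta> * U" using Unn Qv by (rule mult_right_mono[rotated])
    note a = a1 a2
    have b: "0 \<le> (\<Sum>y\<in>T. Q y * vweight Ed w y)" using Qnn vwnn by (auto intro: sum_nonneg)
    have "(\<Sum>y\<in>T. Q y * vweight Ed w y) \<le> (\<Sum>y\<in>T. 2 * e / \<beta> * vweight Ed w y)"
      using QT vwnn by (intro sum_mono mult_right_mono) auto
    also have "\<dots> = 2 * e / \<beta> * (\<Sum>y\<in>T. vweight Ed w y)" by (simp add: sum_distrib_left)
    also have "\<dots> \<le> 2 * e / \<beta> * U" using sumU bpos e by (intro mult_left_mono) auto
    finally have c: "(\<Sum>y\<in>T. Q y * vweight Ed w y) \<le> 2 * e / \<beta> * U" .
    have "e / \<beta> * U \<le> 2 * e / \<beta> * U" using e bpos Unn by (intro mult_right_mono) (auto simp: field_simps)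
    then have "\<bar>Q v * U - (\<Sum>y\<in>T. Q y * vweight Ed w y)\<bar> \<le> 2 * e / \<beta> * U"
      using a b c by (simp add: abs_le_iff)
    then show ?thesis unfolding W Q_def U_def by simp
  qed
qed



lemma set_integrable_const_fin:
  assumes "A \<in> sets M" "emeasure M A < \<infinity>"
  shows "set_integrable M A (\<lambda>_. c::real)"
  unfolding set_integrable_def
  using integrable_real_indicator[OF assms] by (intro integrable_scaleR_left) simp

lemma set_int_diff_bound:
  fixes f g :: "'a \<Rightarrow> real"
  assumes A: "A \<in> sets M" "emeasure M A < \<infinity>"
    and f: "set_integrable M A f" and g: "set_integrable M A g"
    and b: "\<And>x. x \<in> A \<Longrightarrow> \<bar>f x - g x\<bar> \<le> c"
  shows "\<bar>(LINT x:A|M. f x) - (LINT x:A|M. g x)\<bar> \<le> c * measure M A"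
proof -
  have d: "set_integrable M A (\<lambda>x. f x - g x)" using f g by simp
  have 1: "(LINT x:A|M. f x) - (LINT x:A|M. g x) = (LINT x:A|M. f x - g x)" using f g by simp
  have 2: "(LINT x:A|M. f x - g x) \<le> (LINT x:A|M. c)"
    using d set_integrable_const_fin[OF A] b by (intro set_integral_mono) (auto simp: abs_le_iff)
  have 3: "(LINT x:A|M. g x - f x) \<le> (LINT x:A|M. c)"
    using f g set_integrable_const_fin[OF A] b by (intro set_integral_mono) (auto simp: abs_le_iff)
  have 4: "(LINT x:A|M. g x - f x) = - (LINT x:A|M. f x - g x)"
    using f g by simp
  have 5: "(LINT x:A|M. c) = c * measure M A"
  proof -
    have "emeasure M A \<noteq> \<infinity>" using A(2) by simp
    then show ?thesis using A(1) by (simp add: set_integral_const)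
  qed
  show ?thesis unfolding abs_le_iff using 1 2 3 4 5 by linarith
qed

lemma compact_finite_measure:
  assumes K: "compact K" "K \<subseteq> F" and sN: "sets N = sets borel"
    and lf: "\<And>x. x \<in> F \<Longrightarrow> \<exists>e>0. emeasure N (ball x e) < \<infinity>"
  shows "emeasure N K < \<infinity>"
proof -
  define r where "r = (\<lambda>x. SOME e. e > 0 \<and> emeasure N (ball x e) < \<infinity>)"
  have r: "\<And>x. x \<in> K \<Longrightarrow> r x > 0 \<and> emeasure N (ball x (r x)) < \<infinity>"
  proof -
    fix x assume "x \<in> K"
    then have "x \<in> F" using K by blast
    then have "\<exists>e. e > 0 \<and> emeasure N (ball x e) < \<infinity>" using lf by blast
    then show "r x > 0 \<and> emeasure N (ball x (r x)) < \<infinity>" unfolding r_def by (rule someI_ex)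
  qed
  have "K \<subseteq> (\<Union>x\<in>K. ball x (r x))"
  proof
    fix x assume "x \<in> K"
    then have "x \<in> ball x (r x)" using r by simp
    then show "x \<in> (\<Union>x\<in>K. ball x (r x))" using \<open>x \<in> K\<close> by blast
  qed
  then obtain D where D: "D \<subseteq> K" "finite D" "K \<subseteq> (\<Union>x\<in>D. ball x (r x))"
    using compactE_image[OF K(1), of K "\<lambda>x. ball x (r x)"] by blast
  have Ks: "K \<in> sets N" using K sN by (simp add: compact_imp_closed borel_closed)
  have "emeasure N K \<le> emeasure N (\<Union>x\<in>D. ball x (r x))"
    using D(3) by (rule emeasure_mono) (auto simp: sN intro!: sets.finite_UN[OF D(2)])
  also have "\<dots> \<le> (\<Sum>x\<in>D. emeasure N (ball x (r x)))"
    using D(2) by (rule emeasure_subadditive_finite) (auto simp: sN)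
  also have "\<dots> < \<infinity>"
  proof -
    have "\<forall>x\<in>D. emeasure N (ball x (r x)) < \<top>" using D r by auto
    then show ?thesis using ennreal_sum_less_top[OF D(2), of "\<lambda>x. emeasure N (ball x (r x))"] by simp
  qed
  finally show ?thesis .
qed



lemma dist_pair_le: "dist (a::'a::metric_space, b::'b::metric_space) (c, d) \<le> dist a c + dist b d"
proof -
  have "sqrt ((dist a c)\<^sup>2 + (dist b d)\<^sup>2) \<le> sqrt ((dist a c + dist b d)\<^sup>2)"
    by (intro real_sqrt_le_mono) (simp add: power2_eq_square algebra_simps)
  also have "\<dots> = dist a c + dist b d" by simp
  finally show ?thesis by (simp add: dist_Pair_Pair)
qed

lemma unif_q:
  fixes q :: "real \<Rightarrow> 'e::metric_space \<Rightarrow> real"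
  assumes K: "compact K" "K \<subseteq> F" and qc: "continuous_on ({0<..} \<times> F) (\<lambda>(t, x). q t x)"
    and a: "0 < a" and e: "e > 0"
  shows "\<exists>d>0. \<forall>t\<in>{a..b}. \<forall>t'\<in>{a..b}. \<forall>x\<in>K. \<forall>y\<in>K.
           \<bar>t - t'\<bar> < d \<longrightarrow> dist x y < d \<longrightarrow> \<bar>q t x - q t' y\<bar> < e"
proof -
  have S: "compact ({a..b} \<times> K)" using K by (intro compact_Times) auto
  have "continuous_on ({a..b} \<times> K) (\<lambda>(t, x). q t x)"
    by (rule continuous_on_subset[OF qc]) (use K a in auto)
  then have "uniformly_continuous_on ({a..b} \<times> K) (\<lambda>(t, x). q t x)"
    using S by (rule compact_uniformly_continuous)
  then obtain d where d: "d > 0" and dd: "\<And>p p'. p \<in> {a..b} \<times> K \<Longrightarrow> p' \<in> {a..b} \<times> K \<Longrightarrow>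
      dist p' p < d \<Longrightarrow> dist ((\<lambda>(t, x). q t x) p') ((\<lambda>(t, x). q t x) p) < e"
    unfolding uniformly_continuous_on_def using e by metis
  show ?thesis
  proof (intro exI[of _ "d / 2"] conjI ballI impI)
    show "d / 2 > 0" using d by simp
    fix t t' x y assume t: "t \<in> {a..b}" "t' \<in> {a..b}" and xy: "x \<in> K" "y \<in> K"
      and td: "\<bar>t - t'\<bar> < d / 2" and xd: "dist x y < d / 2"
    have "dist (t', y) (t, x) \<le> dist t' t + dist y x" by (rule dist_pair_le)
    also have "\<dots> < d" using td xd by (simp add: dist_real_def dist_commute abs_minus_commute)
    finally have "dist ((\<lambda>(t, x). q t x) (t', y)) ((\<lambda>(t, x). q t x) (t, x)) < e"
      using t xy by (intro dd) auto
    then show "\<bar>q t x - q t' y\<bar> < e" by (simp add: dist_real_def abs_minus_commute)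
  qed
qed

lemma bound_q:
  fixes q :: "real \<Rightarrow> 'e::metric_space \<Rightarrow> real"
  assumes K: "compact K" "K \<subseteq> F" and qc: "continuous_on ({0<..} \<times> F) (\<lambda>(t, x). q t x)"
    and a: "0 < a"
  shows "\<exists>Qm\<ge>0. \<forall>t\<in>{a..b}. \<forall>x\<in>K. \<bar>q t x\<bar> \<le> Qm"
proof -
  have S: "compact ({a..b} \<times> K)" using K by (intro compact_Times) auto
  have "continuous_on ({a..b} \<times> K) (\<lambda>(t, x). q t x)"
    by (rule continuous_on_subset[OF qc]) (use K a in auto)
  then have "compact ((\<lambda>(t, x). q t x) ` ({a..b} \<times> K))"
    using S by (rule compact_continuous_image)
  then obtain B where B: "\<And>y. y \<in> (\<lambda>(t, x). q t x) ` ({a..b} \<times> K) \<Longrightarrow> norm y \<le> B"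
    using compact_imp_bounded bounded_iff by metis
  show ?thesis
  proof (intro exI[of _ "max B 0"] conjI ballI)
    fix t x assume "t \<in> {a..b}" "x \<in> K"
    then have "norm (q t x) \<le> B" by (intro B) auto
    then show "\<bar>q t x\<bar> \<le> max B 0" by simp
  qed simp
qed

lemma infdist_lessE:
  assumes "A \<noteq> {}" "infdist x A < d"
  obtains a where "a \<in> A" "dist x a < d"
proof -
  have "\<exists>a\<in>A. dist x a < d"
  proof (rule ccontr)
    assume "\<not> ?thesis"
    then have "\<And>a. a \<in> A \<Longrightarrow> d \<le> dist x a" by force
    then have "d \<le> infdist x A" unfolding infdist_def using assms(1)
      by (simp add: cINF_greatest)
    with assms(2) show False by simp
  qed
  then show ?thesis using that by blast
qed



theorem theorem6p1:
  fixes F :: "'e::metric_space set" and \<nu> :: "'e measure" and \<rho> :: 'e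
    and q :: "real \<Rightarrow> 'e \<Rightarrow> real"
    and V :: "nat \<Rightarrow> 'e set" and Ed :: "nat \<Rightarrow> 'e \<Rightarrow> 'e \<Rightarrow> bool"
    and M :: "'w measure" and w :: "'w \<Rightarrow> 'e \<Rightarrow> 'e \<Rightarrow> real"
    and \<alpha> \<beta> \<gamma> :: "nat \<Rightarrow> real" and g :: "nat \<Rightarrow> 'e \<Rightarrow> 'e"
    and a b r \<epsilon> :: real
  \<comment> \<open>the space F and the measure \<nu>\<close>
  assumes F_compact: "\<And>x s. s > 0 \<Longrightarrow> compact (F \<inter> cball x s)"
    and rho_F: "\<rho> \<in> F"
    and nu_sets: "sets \<nu> = sets borel"
    and nu_F: "emeasure \<nu> (UNIV - F) = 0"
    and nu_locfin: "\<And>x. x \<in> F \<Longrightarrow> \<exists>e>0. emeasure \<nu> (ball x e) < \<infinity>"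
    and nu_inner_regular: "\<And>A. A \<in> sets \<nu> \<Longrightarrow>
          emeasure \<nu> A = (SUP K \<in> {K. compact K \<and> K \<subseteq> A}. emeasure \<nu> K)"
    and nu_full_support: "\<And>x s. x \<in> F \<Longrightarrow> s > 0 \<Longrightarrow> emeasure \<nu> (F \<inter> ball x s) > 0"
  \<comment> \<open>the limiting kernel q_t\<close>
    and q_cont: "continuous_on ({0<..} \<times> F) (\<lambda>(t, x). q t x)"
    and q_nonneg: "\<And>t x. t > 0 \<Longrightarrow> x \<in> F \<Longrightarrow> q t x \<ge> 0"
    and q_integrable: "\<And>t. t > 0 \<Longrightarrow> set_integrable \<nu> F (q t)"
    and q_int_one: "\<And>t. t > 0 \<Longrightarrow> (LINT x:F|\<nu>. q t x) = 1"
  \<comment> \<open>the graphs G^n (n \<ge> 1): locally finite, connected, at least two vertices, root \<rho>\<close>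
    and Ed_V: "\<And>n x y. n \<ge> 1 \<Longrightarrow> Ed n x y \<Longrightarrow> x \<in> V n \<and> y \<in> V n"
    and Ed_sym: "\<And>n x y. n \<ge> 1 \<Longrightarrow> Ed n x y \<Longrightarrow> Ed n y x"
    and loc_fin: "\<And>n x. n \<ge> 1 \<Longrightarrow> x \<in> V n \<Longrightarrow> finite {y. Ed n x y}"
    and connected: "\<And>n x y. n \<ge> 1 \<Longrightarrow> x \<in> V n \<Longrightarrow> y \<in> V n \<Longrightarrow>
          \<exists>xs. is_walk (V n) (Ed n) x y xs"
    and two_vertices: "\<And>n. n \<ge> 1 \<Longrightarrow> \<exists>x\<in>V n. \<exists>y\<in>V n. x \<noteq> y"
    and rho_V: "\<And>n. n \<ge> 1 \<Longrightarrow> \<rho> \<in> V n"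
  \<comment> \<open>random weights on the edges of all G^n, law P_\<mu>\<close>
    and M_prob: "prob_space M"
    and w_meas: "\<And>x y. (\<lambda>\<omega>. w \<omega> x y) \<in> borel_measurable M"
    and w_sym: "\<And>\<omega> x y. \<omega> \<in> space M \<Longrightarrow> w \<omega> x y = w \<omega> y x"
    and w_pos: "\<And>\<omega> n x y. \<omega> \<in> space M \<Longrightarrow> n \<ge> 1 \<Longrightarrow> Ed n x y \<Longrightarrow> w \<omega> x y > 0"
  \<comment> \<open>scaling sequences\<close>
    and alpha_nonneg: "\<And>n. \<alpha> n \<ge> 0" and beta_nonneg: "\<And>n. \<beta> n \<ge> 0"
    and gamma_nonneg: "\<And>n. \<gamma> n \<ge> 0"
    and alpha_lim: "filterlim \<alpha> at_top sequentially"
    and beta_lim: "filterlim \<beta> at_top sequentially"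
    and gamma_lim: "filterlim \<gamma> at_top sequentially"
  \<comment> \<open>nearest-point maps g_n\<close>
    and g_V: "\<And>n x. n \<ge> 1 \<Longrightarrow> g n x \<in> V n"
    and g_min: "\<And>n x y. n \<ge> 1 \<Longrightarrow> y \<in> V n \<Longrightarrow> dist x (g n x) \<le> dist x y"
  \<comment> \<open>(A1R)(a)\<close>
    and A1R_a1: "\<exists>c1>0. \<forall>n\<ge>1. \<forall>x\<in>V n. \<forall>y\<in>V n.
          gdist (V n) (Ed n) x y \<ge> c1 * \<alpha> n * dist x y"
    and A1R_a2: "\<exists>\<alpha>' :: nat \<Rightarrow> real. (\<forall>n. \<alpha>' n \<ge> 0) \<and> \<alpha>' \<in> o(\<alpha>) \<and>
          (\<forall>s>0. \<exists>c2 n0. \<forall>n\<ge>n0. \<forall>x\<in>V n \<inter> ball \<rho> s. \<forall>y\<in>V n \<inter> ball \<rho> s.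
             gdist (V n) (Ed n) x y \<le> c2 * \<alpha> n * dist x y + \<alpha>' n)"
  \<comment> \<open>(A1R)(b)\<close>
    and A1R_b: "\<And>s. s > 0 \<Longrightarrow>
          (\<lambda>n. SUP x \<in> F \<inter> ball \<rho> s. ereal (infdist x (V n))) \<longlonglongrightarrow> 0"
  \<comment> \<open>(A1R)(c)\<close>
    and A1R_c: "\<And>x s e. x \<in> F \<Longrightarrow> s > 0 \<Longrightarrow> e > 0 \<Longrightarrow>
          (\<lambda>n. measure M {\<omega> \<in> space M.
              gmeasure (V n) (Ed n) (w \<omega>) (ball x s) = \<top> \<or>
              \<bar>enn2real (gmeasure (V n) (Ed n) (w \<omega>) (ball x s)) / \<beta> n
                 - measure \<nu> (ball x s)\<bar> > e}) \<longlonglongrightarrow> 0"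
  \<comment> \<open>(A1R)(d), for every compact interval [a',b'] \<subseteq> (0,\<infinity>)\<close>
    and A1R_d: "\<And>a' b' x s e. 0 < a' \<Longrightarrow> a' \<le> b' \<Longrightarrow> x \<in> F \<Longrightarrow> s > 0 \<Longrightarrow> e > 0 \<Longrightarrow>
          (\<lambda>n. measure M {\<omega> \<in> space M. \<exists>t\<in>{a'..b'}.
              \<bar>walk_prob (Ed n) (w \<omega>) (nat \<lfloor>\<gamma> n * t\<rfloor>) \<rho> (ball x s)
                 - (LINT y:(ball x s \<inter> F)|\<nu>. q t y)\<bar> > e}) \<longlonglongrightarrow> 0"
  \<comment> \<open>(A2R)\<close>
    and A2R: "\<And>a' b' s e. 0 < a' \<Longrightarrow> a' \<le> b' \<Longrightarrow> s > 0 \<Longrightarrow> e > 0 \<Longrightarrow>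
          ((\<lambda>\<delta>. limsup (\<lambda>n. ereal (measure M {\<omega> \<in> space M.
              \<exists>x\<in>gball (V n) (Ed n) \<rho> (\<alpha> n * s). \<exists>y\<in>gball (V n) (Ed n) \<rho> (\<alpha> n * s).
                gdist (V n) (Ed n) x y \<le> \<alpha> n * \<delta> \<and>
                (\<exists>t\<in>{a'..b'}. \<beta> n * \<bar>hk_q (Ed n) (w \<omega>) (nat \<lfloor>\<gamma> n * t\<rfloor>) \<rho> x
                    - hk_q (Ed n) (w \<omega>) (nat \<lfloor>\<gamma> n * t\<rfloor>) \<rho> y\<bar> > e)})))
           \<longlongrightarrow> 0) (at_right 0)"
  \<comment> \<open>the fixed compact interval I = [a,b] \<subseteq> (0,\<infinity>) and r, \<epsilon> > 0\<close>
    and a_pos: "0 < a" and ab: "a \<le> b" and r_pos: "r > 0" and eps_pos: "\<epsilon> > 0"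
  shows "(\<lambda>n. measure M {\<omega> \<in> space M. \<exists>x \<in> F \<inter> ball \<rho> r. \<exists>t\<in>{a..b}.
            \<bar>\<beta> n * hk_q (Ed n) (w \<omega>) (nat \<lfloor>\<gamma> n * t\<rfloor>) \<rho> (g n x) - q t x\<bar> > \<epsilon>})
         \<longlonglongrightarrow> 0"
proof -
  interpret P: prob_space M by (rule M_prob)
  define C where "C = (\<lambda>n. {\<omega> \<in> space M. \<exists>x \<in> F \<inter> ball \<rho> r. \<exists>t\<in>{a..b}.
            \<bar>\<beta> n * hk_q (Ed n) (w \<omega>) (nat \<lfloor>\<gamma> n * t\<rfloor>) \<rho> (g n x) - q t x\<bar> > \<epsilon>})"
  have finnb: "\<And>n x. n \<ge> 1 \<Longrightarrow> finite {y. Ed n x y}"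
  proof -
    fix n x assume n: "n \<ge> (1::nat)"
    show "finite {y. Ed n x y}"
    proof (cases "x \<in> V n")
      case True then show ?thesis using loc_fin n by blast
    next
      case False then have "{y. Ed n x y} = {}" using Ed_V[OF n] by blast
      then show ?thesis by simp
    qed
  qed
  have EVn: "\<And>n x y. n \<ge> 1 \<Longrightarrow> Ed n x y \<Longrightarrow> y \<in> V n" using Ed_V by blast
  have vpos: "\<And>n \<omega> y. n \<ge> 1 \<Longrightarrow> \<omega> \<in> space M \<Longrightarrow> y \<in> V n \<Longrightarrow> vweight (Ed n) (w \<omega>) y > 0"
  proof -
    fix n \<omega> y assume n: "n \<ge> (1::nat)" and \<omega>: "\<omega> \<in> space M" and y: "y \<in> V n"
    show "vweight (Ed n) (w \<omega>) y > 0"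
      by (rule vweight_pos[where V="V n"]) (use n \<omega> y Ed_V finnb w_pos connected two_vertices in auto)
  qed
  have cV: "\<And>n. n \<ge> 1 \<Longrightarrow> countable (V n)"
  proof -
    fix n :: nat assume n: "n \<ge> 1"
    show "countable (V n)"
      by (rule V_countable[where x=\<rho> and Ed="Ed n"]) (use n rho_V connected finnb in auto)
  qed
  have gbfin: "\<And>n R. n \<ge> 1 \<Longrightarrow> finite (gball (V n) (Ed n) \<rho> R)"
  proof -
    fix n :: nat and R assume n: "n \<ge> 1"
    show "finite (gball (V n) (Ed n) \<rho> R)"
      by (rule gball_finite) (use n rho_V connected finnb in auto)
  qed
  have wposn: "\<And>n \<omega> x y. n \<ge> 1 \<Longrightarrow> \<omega> \<in> space M \<Longrightarrow> Ed n x y \<Longrightarrow> w \<omega> x y > 0"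
    using w_pos by blast
  have Qmeas: "\<And>n k x y. n \<ge> 1 \<Longrightarrow> (\<lambda>\<omega>. hk_q (Ed n) (w \<omega>) k x y) \<in> borel_measurable M"
    by (rule meas_hkq) (auto intro: finnb w_meas)
  have Wmeas: "\<And>n k x A. n \<ge> 1 \<Longrightarrow> (\<lambda>\<omega>. walk_prob (Ed n) (w \<omega>) k x A) \<in> borel_measurable M"
    by (rule meas_wp) (auto intro: finnb w_meas)
  have Gmeas: "\<And>n A. n \<ge> 1 \<Longrightarrow> (\<lambda>\<omega>. gmeasure (V n) (Ed n) (w \<omega>) A) \<in> borel_measurable M"
    by (rule meas_gmeasure) (auto intro: finnb w_meas cV)
  have F_closed: "closed F"
    unfolding closed_def open_dist
  proof (intro ballI)
    fix x assume "x \<in> - F"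
    have "closed (F \<inter> cball x 1)" using F_compact[of 1 x] by (simp add: compact_imp_closed)
    moreover have "x \<notin> F \<inter> cball x 1" using \<open>x \<in> - F\<close> by blast
    ultimately obtain e where e: "e > 0" "ball x e \<subseteq> - (F \<inter> cball x 1)"
      using open_contains_ball[of "- (F \<inter> cball x 1)"] by (auto simp: closed_def)
    show "\<exists>e>0. \<forall>y. dist y x < e \<longrightarrow> y \<in> - F"
    proof (intro exI[of _ "min e 1"] conjI allI impI)
      show "min e 1 > 0" using e by simp
      fix y assume "dist y x < min e 1"
      then have "y \<in> ball x e" "y \<in> cball x 1" by (auto simp: dist_commute)
      then show "y \<in> - F" using e by auto
    qed
  qed
  have F_sets: "F \<in> sets \<nu>" using F_closed nu_sets by simp
  have sets_ball: "\<And>z s. ball z s \<in> sets \<nu>" using nu_sets by simp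
  define K1 where "K1 = F \<inter> cball \<rho> (r + 1)"
  define Kr where "Kr = F \<inter> cball \<rho> r"
  have K1c: "compact K1" unfolding K1_def using F_compact r_pos by simp
  have Krc: "compact Kr" unfolding Kr_def using F_compact r_pos by simp
  have K1fin: "emeasure \<nu> K1 < \<infinity>"
    by (rule compact_finite_measure[OF K1c _ nu_sets nu_locfin]) (auto simp: K1_def)
  obtain du where du: "du > 0" and duq: "\<And>t t' x y. t \<in> {a..b+1} \<Longrightarrow> t' \<in> {a..b+1} \<Longrightarrow> x \<in> K1 \<Longrightarrow> y \<in> K1 \<Longrightarrow>
      \<bar>t - t'\<bar> < du \<Longrightarrow> dist x y < du \<Longrightarrow> \<bar>q t x - q t' y\<bar> < \<epsilon> / 10"
    using unif_q[OF K1c _ q_cont a_pos, of "\<epsilon>/10" "b+1"] eps_pos by (auto simp: K1_def)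
  obtain Qm where Qm: "Qm \<ge> 0" and Qmb: "\<And>t x. t \<in> {a..b+1} \<Longrightarrow> x \<in> K1 \<Longrightarrow> \<bar>q t x\<bar> \<le> Qm"
    using bound_q[OF K1c _ q_cont a_pos, of "b+1"] by (auto simp: K1_def)
  obtain \<alpha>' c2 n0 where a'nn: "\<And>n. \<alpha>' n \<ge> 0" and a'o: "\<alpha>' \<in> o(\<alpha>)"
    and c2: "\<And>n x y. n \<ge> n0 \<Longrightarrow> x \<in> V n \<inter> ball \<rho> (r+1) \<Longrightarrow> y \<in> V n \<inter> ball \<rho> (r+1) \<Longrightarrow>
        gdist (V n) (Ed n) x y \<le> c2 * \<alpha> n * dist x y + \<alpha>' n"
  proof -
    obtain \<alpha>' where h: "(\<forall>n. \<alpha>' n \<ge> 0) \<and> \<alpha>' \<in> o(\<alpha>) \<and>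
          (\<forall>s>0. \<exists>c2 n0. \<forall>n\<ge>n0. \<forall>x\<in>V n \<inter> ball \<rho> s. \<forall>y\<in>V n \<inter> ball \<rho> s.
             gdist (V n) (Ed n) x y \<le> c2 * \<alpha> n * dist x y + \<alpha>' n)" using A1R_a2 by blast
    then obtain c2 n0 where "\<forall>n\<ge>n0. \<forall>x\<in>V n \<inter> ball \<rho> (r+1). \<forall>y\<in>V n \<inter> ball \<rho> (r+1).
             gdist (V n) (Ed n) x y \<le> c2 * \<alpha> n * dist x y + \<alpha>' n"
      using r_pos by (meson add_pos_pos zero_less_one)
    then show ?thesis using that h by blast
  qed
  define C2 where "C2 = \<bar>c2\<bar> + 1"
  have C2: "C2 \<ge> 1" unfolding C2_def by simp
  have c2': "\<And>n x y. n \<ge> n0 \<Longrightarrow> x \<in> V n \<inter> ball \<rho> (r+1) \<Longrightarrow> y \<in> V n \<inter> ball \<rho> (r+1) \<Longrightarrow>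
        gdist (V n) (Ed n) x y \<le> C2 * \<alpha> n * dist x y + \<alpha>' n"
  proof -
    fix n x y assume h: "n \<ge> n0" "x \<in> V n \<inter> ball \<rho> (r+1)" "y \<in> V n \<inter> ball \<rho> (r+1)"
    have "c2 * \<alpha> n * dist x y \<le> C2 * \<alpha> n * dist x y"
      unfolding C2_def using alpha_nonneg[of n]
      by (intro mult_right_mono) (auto intro: order.trans[OF abs_ge_self])
    then show "gdist (V n) (Ed n) x y \<le> C2 * \<alpha> n * dist x y + \<alpha>' n" using c2[OF h] by linarith
  qed
  define s where "s = C2 * (r + 1) + 1"
  have s_pos: "s > 0" unfolding s_def using C2 r_pos by (simp add: add_pos_nonneg)
  have main: "\<And>\<eta>. \<eta> > 0 \<Longrightarrow> eventually (\<lambda>n. measure M (C n) < \<eta>) sequentially"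
  proof -
    fix \<eta> :: real assume eta: "\<eta> > 0"
    define Abad where "Abad = (\<lambda>\<delta> n. {\<omega> \<in> space M.
              \<exists>x\<in>gball (V n) (Ed n) \<rho> (\<alpha> n * s). \<exists>y\<in>gball (V n) (Ed n) \<rho> (\<alpha> n * s).
                gdist (V n) (Ed n) x y \<le> \<alpha> n * \<delta> \<and>
                (\<exists>t\<in>{a..b}. \<beta> n * \<bar>hk_q (Ed n) (w \<omega>) (nat \<lfloor>\<gamma> n * t\<rfloor>) \<rho> x
                    - hk_q (Ed n) (w \<omega>) (nat \<lfloor>\<gamma> n * t\<rfloor>) \<rho> y\<bar> > \<epsilon> / 10)})"
    have lim: "((\<lambda>\<delta>. limsup (\<lambda>n. ereal (measure M (Abad \<delta> n)))) \<longlongrightarrow> 0) (at_right 0)"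
      unfolding Abad_def using A2R[OF a_pos ab s_pos, of "\<epsilon>/10"] eps_pos by simp
    have ev1: "eventually (\<lambda>\<delta>. limsup (\<lambda>n. ereal (measure M (Abad \<delta> n))) < ereal (\<eta>/2)) (at_right 0)"
      using order_tendstoD(2)[OF lim, of "ereal (\<eta>/2)"] eta by simp
    have ev2: "eventually (\<lambda>\<delta>::real. \<delta> < min 1 du) (at_right 0)"
      using du by (auto simp: eventually_at_right_field intro!: exI[of _ "min 1 du"])
    obtain \<delta>' where d'pos: "\<delta>' > 0" and d'small: "\<delta>' < min 1 du"
      and d'lim: "limsup (\<lambda>n. ereal (measure M (Abad \<delta>' n))) < ereal (\<eta>/2)"
    proof -
      from eventually_conj[OF ev1 ev2] obtain b0 where b0: "b0 > 0"
        and hb: "\<And>y. y > 0 \<Longrightarrow> y < b0 \<Longrightarrow> limsup (\<lambda>n. ereal (measure M (Abad y n))) < ereal (\<eta>/2) \<and> y < min 1 du"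
        unfolding eventually_at_right_field by auto
      have "limsup (\<lambda>n. ereal (measure M (Abad (b0/2) n))) < ereal (\<eta>/2) \<and> b0/2 < min 1 du"
        using b0 by (intro hb) auto
      then show ?thesis using that[of "b0/2"] b0 by auto
    qed
    define \<delta> where "\<delta> = \<delta>' / (6 * C2)"
    have dpos: "\<delta> > 0" unfolding \<delta>_def using d'pos C2 by simp
    have d_le: "\<delta> \<le> \<delta>' / 6" unfolding \<delta>_def using d'pos C2 by (simp add: field_simps)
    have d'1: "\<delta>' < 1" "\<delta>' < du" using d'small by auto
    have d_small: "6 * \<delta> < 1" "2 * \<delta> < du" using d_le d'1 dpos by linarith+
    have C2d: "C2 * (3 * \<delta>) = \<delta>' / 2" unfolding \<delta>_def using C2 by (simp add: field_simps)
    obtain Z where Z: "Z \<subseteq> Kr" "finite Z" "Kr \<subseteq> (\<Union>z\<in>Z. ball z \<delta>)"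
    proof -
      have "Kr \<subseteq> (\<Union>z\<in>Kr. ball z \<delta>)" using dpos by auto
      then show ?thesis using compactE_image[OF Krc, of Kr "\<lambda>z. ball z \<delta>"] that by blast
    qed
    define nz where "nz = (\<lambda>z. measure \<nu> (ball z \<delta>))"
    have BF_K1: "\<And>z. z \<in> Z \<Longrightarrow> ball z \<delta> \<inter> F \<subseteq> K1"
    proof -
      fix z assume "z \<in> Z"
      then have "dist \<rho> z \<le> r" using Z by (auto simp: Kr_def)
      show "ball z \<delta> \<inter> F \<subseteq> K1"
      proof
        fix y assume y: "y \<in> ball z \<delta> \<inter> F"
        have "dist \<rho> y \<le> dist \<rho> z + dist z y" by (rule dist_triangle)
        then have "dist \<rho> y \<le> r + 1" using y \<open>dist \<rho> z \<le> r\<close> d_small by simp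
        then show "y \<in> K1" using y by (simp add: K1_def)
      qed
    qed
    have spnu: "space \<nu> = UNIV" using sets_eq_imp_space_eq[OF nu_sets] by simp
    have nullF: "UNIV - F \<in> null_sets \<nu>"
    proof -
      have "UNIV - F \<in> sets \<nu>" using sets.compl_sets[OF F_sets] spnu by simp
      then show ?thesis using nu_F by (simp add: null_sets_def)
    qed
    have ballF_e: "\<And>z. emeasure \<nu> (ball z \<delta> \<inter> F) = emeasure \<nu> (ball z \<delta>)"
    proof -
      fix z
      have null: "ball z \<delta> - F \<in> null_sets \<nu>"
        by (rule null_sets_subset[OF nullF]) (auto simp: sets_ball F_sets)
      have "emeasure \<nu> ((ball z \<delta> \<inter> F) \<union> (ball z \<delta> - F)) = emeasure \<nu> (ball z \<delta> \<inter> F)"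
        by (rule emeasure_Un_null_set[OF _ null]) (auto simp: sets_ball F_sets)
      moreover have "(ball z \<delta> \<inter> F) \<union> (ball z \<delta> - F) = ball z \<delta>" by blast
      ultimately show "emeasure \<nu> (ball z \<delta> \<inter> F) = emeasure \<nu> (ball z \<delta>)" by simp
    qed
    have ballF: "\<And>z. measure \<nu> (ball z \<delta> \<inter> F) = nz z"
      unfolding nz_def measure_def using ballF_e by simp
    have ballfin: "\<And>z. z \<in> Z \<Longrightarrow> emeasure \<nu> (ball z \<delta>) < \<infinity>"
    proof -
      fix z assume z: "z \<in> Z"
      have "emeasure \<nu> (ball z \<delta> \<inter> F) \<le> emeasure \<nu> K1"
        using BF_K1[OF z] by (intro emeasure_mono) (auto simp: K1c compact_imp_closed nu_sets)
      then show "emeasure \<nu> (ball z \<delta>) < \<infinity>" using K1fin ballF_e[of z] by simp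
    qed
    have nzpos: "\<And>z. z \<in> Z \<Longrightarrow> nz z > 0"
    proof -
      fix z assume z: "z \<in> Z"
      then have "z \<in> F" using Z by (auto simp: Kr_def)
      then have "emeasure \<nu> (F \<inter> ball z \<delta>) > 0" using nu_full_support dpos by blast
      then have "emeasure \<nu> (ball z \<delta>) > 0" using ballF_e[of z] by (simp add: Int_commute)
      then show "nz z > 0" unfolding nz_def using ballfin[OF z]
        by (simp add: measure_def enn2real_positive_iff)
    qed
    define ec where "ec = (\<lambda>z. min (nz z / 2) (\<epsilon> * nz z / (20 * (Qm + 1))))"
    define ed where "ed = (\<lambda>z. \<epsilon> * nz z / 20)"
    define Cbad where "Cbad = (\<lambda>z n. {\<omega> \<in> space M.
              gmeasure (V n) (Ed n) (w \<omega>) (ball z \<delta>) = \<top> \<or>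
              \<bar>enn2real (gmeasure (V n) (Ed n) (w \<omega>) (ball z \<delta>)) / \<beta> n
                 - measure \<nu> (ball z \<delta>)\<bar> > ec z})"
    define Dbad where "Dbad = (\<lambda>z n. {\<omega> \<in> space M. \<exists>t\<in>{a..b+1}.
              \<bar>walk_prob (Ed n) (w \<omega>) (nat \<lfloor>\<gamma> n * t\<rfloor>) \<rho> (ball z \<delta>)
                 - (LINT y:(ball z \<delta> \<inter> F)|\<nu>. q t y)\<bar> > ed z})"
    have ZF: "\<And>z. z \<in> Z \<Longrightarrow> z \<in> F" using Z by (auto simp: Kr_def)
    have ecpos: "\<And>z. z \<in> Z \<Longrightarrow> ec z > 0"
      unfolding ec_def using nzpos eps_pos Qm by (auto intro!: divide_pos_pos mult_pos_pos)
    have edpos: "\<And>z. z \<in> Z \<Longrightarrow> ed z > 0"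
      unfolding ed_def using nzpos eps_pos by auto
    have limC: "\<And>z. z \<in> Z \<Longrightarrow> (\<lambda>n. measure M (Cbad z n)) \<longlonglongrightarrow> 0"
      unfolding Cbad_def by (rule A1R_c[OF ZF dpos ecpos])
    have limD: "\<And>z. z \<in> Z \<Longrightarrow> (\<lambda>n. measure M (Dbad z n)) \<longlonglongrightarrow> 0"
      unfolding Dbad_def using ab by (intro A1R_d[OF a_pos _ ZF dpos edpos]) auto
    have limS: "(\<lambda>n. \<Sum>z\<in>Z. measure M (Cbad z n) + measure M (Dbad z n)) \<longlonglongrightarrow> 0"
      by (rule tendsto_null_sum) (intro tendsto_add_zero limC limD)
    have evS: "eventually (\<lambda>n. (\<Sum>z\<in>Z. measure M (Cbad z n) + measure M (Dbad z n)) < \<eta> / 2) sequentially"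
      using order_tendstoD(2)[OF limS, of "\<eta>/2"] eta by simp
    have evA: "eventually (\<lambda>n. measure M (Abad \<delta>' n) < \<eta> / 2) sequentially"
      using Limsup_lessD[OF d'lim] by simp
    have evb: "eventually (\<lambda>n. \<beta> n > 0) sequentially"
      using beta_lim unfolding filterlim_at_top_dense by blast
    have eva: "eventually (\<lambda>n. \<alpha> n > 0) sequentially"
      using alpha_lim unfolding filterlim_at_top_dense by blast
    have evg: "eventually (\<lambda>n. \<gamma> n > max 1 (1 / du)) sequentially"
      using gamma_lim unfolding filterlim_at_top_dense by blast
    have eva': "eventually (\<lambda>n. \<alpha>' n \<le> \<delta>' / 2 * \<alpha> n) sequentially"
    proof -
      have "eventually (\<lambda>n. norm (\<alpha>' n) \<le> \<delta>' / 2 * norm (\<alpha> n)) sequentially"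
        using landau_o.smallD[OF a'o, of "\<delta>'/2"] d'pos by simp
      then show ?thesis
        by eventually_elim (use alpha_nonneg a'nn in auto)
    qed
    have evinf: "eventually (\<lambda>n. (SUP x \<in> F \<inter> ball \<rho> r. ereal (infdist x (V n))) < ereal \<delta>) sequentially"
      using order_tendstoD(2)[OF A1R_b[OF r_pos], of "ereal \<delta>"] dpos by simp
    have evn: "eventually (\<lambda>n. n \<ge> max 1 n0) sequentially" by (rule eventually_ge_at_top)
    show "eventually (\<lambda>n. measure M (C n) < \<eta>) sequentially"
      using evS evA evb eva evg eva' evinf evn
    proof eventually_elim
      case (elim n)
      have n1: "n \<ge> 1" and nn0: "n \<ge> n0" using elim by auto
      have core: "\<And>\<omega> x t. \<omega> \<in> space M \<Longrightarrow> \<omega> \<notin> Abad \<delta>' n \<Longrightarrow> (\<forall>z\<in>Z. \<omega> \<notin> Cbad z n \<and> \<omega> \<notin> Dbad z n)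
          \<Longrightarrow> x \<in> F \<inter> ball \<rho> r \<Longrightarrow> t \<in> {a..b}
          \<Longrightarrow> \<bar>\<beta> n * hk_q (Ed n) (w \<omega>) (nat \<lfloor>\<gamma> n * t\<rfloor>) \<rho> (g n x) - q t x\<bar> < \<epsilon>"
      proof -
        fix \<omega> x t
        assume \<omega>: "\<omega> \<in> space M" and nA: "\<omega> \<notin> Abad \<delta>' n" and nCD: "\<forall>z\<in>Z. \<omega> \<notin> Cbad z n \<and> \<omega> \<notin> Dbad z n"
          and x: "x \<in> F \<inter> ball \<rho> r" and t: "t \<in> {a..b}"
        have bpos: "\<beta> n > 0" and apos: "\<alpha> n > 0" and gbig: "\<gamma> n > max 1 (1/du)"
          and a'b: "\<alpha>' n \<le> \<delta>' / 2 * \<alpha> n"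
          and sup: "(SUP x \<in> F \<inter> ball \<rho> r. ereal (infdist x (V n))) < ereal \<delta>" using elim by auto
        define m where "m = nat \<lfloor>\<gamma> n * t\<rfloor>"
        define v where "v = g n x"
        define Q where "Q = (\<lambda>y. hk_q (Ed n) (w \<omega>) m \<rho> y)"
        have vV: "v \<in> V n" unfolding v_def using g_V n1 by blast
        have "infdist x (V n) < \<delta>"
        proof -
          have "ereal (infdist x (V n)) \<le> (SUP x \<in> F \<inter> ball \<rho> r. ereal (infdist x (V n)))"
            using x by (intro SUP_upper)
          then have "ereal (infdist x (V n)) < ereal \<delta>" using sup by (rule le_less_trans)
          then show ?thesis by simp
        qed
        then obtain a0 where a0: "a0 \<in> V n" "dist x a0 < \<delta>"
          using infdist_lessE[of "V n" x \<delta>] rho_V[OF n1] by blast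
        have dxv: "dist x v < \<delta>" using g_min[OF n1 a0(1), of x] a0(2) unfolding v_def by simp
        have "x \<in> Kr" using x by (auto simp: Kr_def)
        then obtain z where z: "z \<in> Z" "x \<in> ball z \<delta>" using Z(3) by blast
        define B where "B = ball z \<delta>"
        have dzx: "dist z x < \<delta>" using z by simp
        have drx: "dist \<rho> x < r" using x by simp
        have rhoV: "\<rho> \<in> V n \<inter> ball \<rho> (r+1)" using rho_V[OF n1] r_pos by simp
        have vball: "v \<in> V n \<inter> ball \<rho> (r+1)"
        proof -
          have "dist \<rho> v \<le> dist \<rho> x + dist x v" by (rule dist_triangle)
          then show ?thesis using vV drx dxv d_small by simp
        qed
        have ingball: "\<And>y. y \<in> V n \<inter> ball \<rho> (r+1) \<Longrightarrow> y \<in> gball (V n) (Ed n) \<rho> (\<alpha> n * s)"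
        proof -
          fix y assume y: "y \<in> V n \<inter> ball \<rho> (r+1)"
          have "gdist (V n) (Ed n) \<rho> y \<le> C2 * \<alpha> n * dist \<rho> y + \<alpha>' n" by (rule c2'[OF nn0 rhoV y])
          also have "\<dots> \<le> C2 * \<alpha> n * (r + 1) + \<delta>' / 2 * \<alpha> n"
            using y C2 apos a'b by (intro add_mono mult_left_mono) auto
          also have "\<dots> < C2 * \<alpha> n * (r + 1) + \<alpha> n" using d'1 apos by simp
          also have "\<dots> = \<alpha> n * s" unfolding s_def by (simp add: algebra_simps)
          finally show "y \<in> gball (V n) (Ed n) \<rho> (\<alpha> n * s)" using y by (simp add: gball_def)
        qed
        have close: "\<And>y. y \<in> B \<inter> V n \<Longrightarrow> \<beta> n * \<bar>Q y - Q v\<bar> \<le> \<epsilon> / 10"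
        proof -
          fix y assume y: "y \<in> B \<inter> V n"
          have dzy: "dist z y < \<delta>" using y by (simp add: B_def)
          have t1: "dist \<rho> y \<le> dist \<rho> x + dist x y" by (rule dist_triangle)
          have t2: "dist x y \<le> dist x z + dist z y" by (rule dist_triangle)
          have "dist \<rho> y \<le> dist \<rho> x + dist x z + dist z y" using t1 t2 by linarith
          then have yball: "y \<in> V n \<inter> ball \<rho> (r+1)" using y drx dzx dzy d_small by (simp add: dist_commute)
          have t3: "dist y v \<le> dist y x + dist x v" by (rule dist_triangle)
          have t4: "dist y x \<le> dist y z + dist z x" by (rule dist_triangle)
          have "dist y v \<le> dist y z + dist z x + dist x v" using t3 t4 by linarith
          then have dyv: "dist y v \<le> 3 * \<delta>" using dzx dzy dxv by (simp add: dist_commute)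
          have "gdist (V n) (Ed n) y v \<le> C2 * \<alpha> n * dist y v + \<alpha>' n" by (rule c2'[OF nn0 yball vball])
          also have "\<dots> \<le> C2 * \<alpha> n * (3 * \<delta>) + \<delta>' / 2 * \<alpha> n"
            using dyv C2 apos a'b by (intro add_mono mult_left_mono) auto
          also have "\<dots> = \<alpha> n * \<delta>'"
          proof -
            have "C2 * \<alpha> n * (3 * \<delta>) = \<alpha> n * (C2 * (3 * \<delta>))" by (simp only: ac_simps)
            also have "\<dots> = \<alpha> n * (\<delta>' / 2)" using C2d by simp
            finally have e1: "C2 * \<alpha> n * (3 * \<delta>) = \<alpha> n * (\<delta>' / 2)" .
            show ?thesis unfolding e1 by (simp add: field_simps)
          qed
          finally have gd: "gdist (V n) (Ed n) y v \<le> \<alpha> n * \<delta>'" .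
          have m_t: "m = nat \<lfloor>\<gamma> n * t\<rfloor>" by (simp add: m_def)
          show "\<beta> n * \<bar>Q y - Q v\<bar> \<le> \<epsilon> / 10"
          proof (rule ccontr)
            assume "\<not> ?thesis"
            then have "\<beta> n * \<bar>hk_q (Ed n) (w \<omega>) (nat \<lfloor>\<gamma> n * t\<rfloor>) \<rho> y
                    - hk_q (Ed n) (w \<omega>) (nat \<lfloor>\<gamma> n * t\<rfloor>) \<rho> v\<bar> > \<epsilon> / 10" unfolding Q_def m_t by simp
            then have "\<omega> \<in> Abad \<delta>' n" unfolding Abad_def
              using \<omega> ingball[OF yball] ingball[OF vball] gd t by blast
            with nA show False by simp
          qed
        qed
        have zZ: "z \<in> Z" by (rule z(1))
        have nzp: "nz z > 0" by (rule nzpos[OF zZ])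
        define U where "U = enn2real (gmeasure (V n) (Ed n) (w \<omega>) B)"
        have nC: "\<omega> \<notin> Cbad z n" and nD: "\<omega> \<notin> Dbad z n" using nCD zZ by auto
        have fm: "gmeasure (V n) (Ed n) (w \<omega>) B \<noteq> \<top>"
          and cb: "\<bar>U / \<beta> n - nz z\<bar> \<le> ec z"
          using nC \<omega> unfolding Cbad_def U_def B_def nz_def by auto
        define I where "I = (\<lambda>t. LINT y:(B \<inter> F)|\<nu>. q t y)"
        have db: "\<And>t. t \<in> {a..b+1} \<Longrightarrow> \<bar>walk_prob (Ed n) (w \<omega>) (nat \<lfloor>\<gamma> n * t\<rfloor>) \<rho> B - I t\<bar> \<le> ed z"
          using nD \<omega> unfolding Dbad_def I_def B_def by (auto simp: not_less)
        have gpos: "\<gamma> n > 1" "\<gamma> n > 1 / du" using gbig by auto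
        define t' where "t' = t + 1 / \<gamma> n"
        have gt1: "1 / \<gamma> n < 1" "1 / \<gamma> n > 0" using gpos by (auto simp: field_simps)
        have t'I: "t' \<in> {a..b+1}"
        proof -
          have "a \<le> t" "t \<le> b" using t by auto
          with gt1 show ?thesis unfolding t'_def atLeastAtMost_iff by linarith
        qed
        have tI: "t \<in> {a..b+1}" using t by auto
        have tt': "\<bar>t' - t\<bar> < du"
        proof -
          have "1 / \<gamma> n < du" using gpos du by (simp add: field_simps)
          then show ?thesis unfolding t'_def using gt1 by simp
        qed
        have mS: "nat \<lfloor>\<gamma> n * t'\<rfloor> = Suc m"
        proof -
          have "\<gamma> n * t' = \<gamma> n * t + 1" unfolding t'_def using gpos by (simp add: field_simps)
          then have fl: "\<lfloor>\<gamma> n * t'\<rfloor> = \<lfloor>\<gamma> n * t\<rfloor> + 1" by simp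
          have "\<gamma> n * t \<ge> 0" using gamma_nonneg[of n] t a_pos by simp
          then have "\<lfloor>\<gamma> n * t\<rfloor> \<ge> 0" by simp
          then show ?thesis unfolding m_def fl by (simp add: nat_add_distrib)
        qed
        have W1: "\<bar>walk_prob (Ed n) (w \<omega>) m \<rho> B - I t\<bar> \<le> ed z" using db[OF tI] unfolding m_def .
        have W2: "\<bar>walk_prob (Ed n) (w \<omega>) (Suc m) \<rho> B - I t'\<bar> \<le> ed z" using db[OF t'I] unfolding mS .
        have BFsets: "B \<inter> F \<in> sets \<nu>" unfolding B_def using sets_ball F_sets by blast
        have BFfin: "emeasure \<nu> (B \<inter> F) < \<infinity>" unfolding B_def using ballF_e ballfin[OF zZ] by simp
        have BFm: "measure \<nu> (B \<inter> F) = nz z" unfolding B_def by (rule ballF)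
        have BFK: "B \<inter> F \<subseteq> K1" unfolding B_def by (rule BF_K1[OF zZ])
        have xK1: "x \<in> K1" using x r_pos by (auto simp: K1_def)
        have tpos: "\<And>t. t \<in> {a..b+1} \<Longrightarrow> t > 0" using a_pos by auto
        have qint: "\<And>t. t \<in> {a..b+1} \<Longrightarrow> set_integrable \<nu> (B \<inter> F) (q t)"
        proof -
          fix t :: real assume "t \<in> {a..b+1}"
          then have "set_integrable \<nu> F (q t)" using q_integrable tpos by blast
          then show "set_integrable \<nu> (B \<inter> F) (q t)" by (rule set_integrable_subset) (use BFsets in auto)
        qed
        have Idiff: "\<bar>I t' - I t\<bar> \<le> \<epsilon> / 10 * nz z"
        proof -
          have "\<bar>I t' - I t\<bar> \<le> \<epsilon> / 10 * measure \<nu> (B \<inter> F)"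
            unfolding I_def
          proof (rule set_int_diff_bound[OF BFsets BFfin qint[OF t'I] qint[OF tI]])
            fix y assume y: "y \<in> B \<inter> F"
            then have "y \<in> K1" using BFK by blast
            then show "\<bar>q t' y - q t y\<bar> \<le> \<epsilon> / 10"
              using duq[OF t'I tI, of y y] tt' du by simp
          qed
          then show ?thesis using BFm by simp
        qed
        have I6: "\<bar>I t / nz z - q t x\<bar> \<le> \<epsilon> / 10"
        proof -
          have "\<bar>I t - (LINT y:(B \<inter> F)|\<nu>. q t x)\<bar> \<le> \<epsilon> / 10 * measure \<nu> (B \<inter> F)"
            unfolding I_def
          proof (rule set_int_diff_bound[OF BFsets BFfin qint[OF tI] set_integrable_const_fin[OF BFsets BFfin]])
            fix y assume y: "y \<in> B \<inter> F"
            then have yK: "y \<in> K1" using BFK by blast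
            have "dist y x \<le> dist y z + dist z x" by (rule dist_triangle)
            then have "dist y x < du" using y dzx d_small unfolding B_def by (simp add: dist_commute)
            then show "\<bar>q t y - q t x\<bar> \<le> \<epsilon> / 10"
              using duq[OF tI tI yK xK1] du by simp
          qed
          moreover have "(LINT y:(B \<inter> F)|\<nu>. q t x) = q t x * nz z"
            using BFsets BFfin BFm by (simp add: set_integral_const)
          ultimately have "\<bar>I t - q t x * nz z\<bar> \<le> \<epsilon> / 10 * nz z" using BFm by simp
          then have "\<bar>I t - q t x * nz z\<bar> / nz z \<le> \<epsilon> / 10" using nzp by (simp add: field_simps)
          moreover have "\<bar>I t - q t x * nz z\<bar> / nz z = \<bar>I t / nz z - q t x\<bar>"
            using nzp by (simp add: field_simps abs_div_pos[symmetric])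
          ultimately show ?thesis by simp
        qed
        have I5: "0 \<le> I t" "I t \<le> Qm * nz z"
        proof -
          have "(LINT y:(B \<inter> F)|\<nu>. (0::real)) \<le> I t" unfolding I_def
            using q_nonneg tpos[OF tI] by (intro set_integral_mono[OF set_integrable_const_fin[OF BFsets BFfin] qint[OF tI]]) auto
          then show "0 \<le> I t" by simp
          have "I t \<le> (LINT y:(B \<inter> F)|\<nu>. Qm)" unfolding I_def
          proof (intro set_integral_mono[OF qint[OF tI] set_integrable_const_fin[OF BFsets BFfin]])
            fix y assume "y \<in> B \<inter> F"
            then have "y \<in> K1" using BFK by blast
            then show "q t y \<le> Qm" using Qmb[OF tI] by (meson abs_ge_self order.trans)
          qed
          also have "\<dots> = Qm * nz z" using BFsets BFfin BFm by (simp add: set_integral_const)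
          finally show "I t \<le> Qm * nz z" .
        qed
        have GE: "\<bar>Q v * U - (walk_prob (Ed n) (w \<omega>) m \<rho> B + walk_prob (Ed n) (w \<omega>) (Suc m) \<rho> B) / 2\<bar>
             \<le> 2 * (\<epsilon> / 10) * U / \<beta> n"
          unfolding Q_def U_def
        proof (rule graph_est[where V="V n"])
          show "\<And>x. finite {y. Ed n x y}" using finnb n1 by blast
          show "\<And>x y. Ed n x y \<Longrightarrow> y \<in> V n" using EVn n1 by blast
          show "\<And>x y. Ed n x y \<Longrightarrow> 0 < w \<omega> x y" using wposn n1 \<omega> by blast
          show "\<And>y. y \<in> V n \<Longrightarrow> 0 < vweight (Ed n) (w \<omega>) y" using vpos n1 \<omega> by blast
          show "\<rho> \<in> V n" using rho_V n1 by blast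
          show "v \<in> V n" by (rule vV)
          show "gmeasure (V n) (Ed n) (w \<omega>) B \<noteq> \<top>" by (rule fm)
          show "\<And>y. y \<in> B \<inter> V n \<Longrightarrow> \<beta> n * \<bar>hk_q (Ed n) (w \<omega>) m \<rho> y - hk_q (Ed n) (w \<omega>) m \<rho> v\<bar> \<le> \<epsilon> / 10"
            using close unfolding Q_def by blast
          show "0 < \<beta> n" by (rule bpos)
          show "0 \<le> \<epsilon> / 10" using eps_pos by simp
        qed
        define X where "X = \<beta> n * Q v"
        define N where "N = U / \<beta> n"
        define W where "W = (walk_prob (Ed n) (w \<omega>) m \<rho> B + walk_prob (Ed n) (w \<omega>) (Suc m) \<rho> B) / 2"
        have h1: "\<bar>X * N - W\<bar> \<le> 2 * (\<epsilon> / 10) * N"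
        proof -
          have e: "X * N = Q v * U" unfolding X_def N_def using bpos by simp
          have "\<bar>X * N - W\<bar> = \<bar>Q v * U - W\<bar>" by (simp only: e)
          also have "\<dots> \<le> 2 * (\<epsilon> / 10) * U / \<beta> n" using GE unfolding W_def .
          also have "\<dots> = 2 * (\<epsilon> / 10) * N" unfolding N_def by simp
          finally show ?thesis .
        qed
        have h2: "\<bar>W - I t\<bar> \<le> \<epsilon> * nz z / 10"
        proof -
          have e: "\<epsilon> / 10 * nz z = (\<epsilon> * nz z) / 10" by simp
          show ?thesis unfolding W_def
            by (rule avg_bound) (use W1 W2 Idiff in \<open>simp_all only: ed_def e\<close>)
        qed
        have h3: "\<bar>N - nz z\<bar> \<le> nz z / 2" and h4: "\<bar>N - nz z\<bar> \<le> \<epsilon> * nz z / (20 * (Qm + 1))"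
          using cb unfolding N_def ec_def by auto
        have "\<bar>X - q t x\<bar> < \<epsilon>"
          by (rule core_arith[OF nzp eps_pos Qm h1 h2 h3 h4 I5 I6])
        then show "\<bar>\<beta> n * hk_q (Ed n) (w \<omega>) (nat \<lfloor>\<gamma> n * t\<rfloor>) \<rho> (g n x) - q t x\<bar> < \<epsilon>"
          unfolding X_def Q_def m_def v_def .
      qed
      have incl: "C n \<subseteq> Abad \<delta>' n \<union> (\<Union>z\<in>Z. Cbad z n \<union> Dbad z n)"
      proof
        fix \<omega> assume \<omega>: "\<omega> \<in> C n"
        show "\<omega> \<in> Abad \<delta>' n \<union> (\<Union>z\<in>Z. Cbad z n \<union> Dbad z n)"
        proof (rule ccontr)
          assume "\<omega> \<notin> Abad \<delta>' n \<union> (\<Union>z\<in>Z. Cbad z n \<union> Dbad z n)"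
          then have h: "\<omega> \<notin> Abad \<delta>' n" "\<forall>z\<in>Z. \<omega> \<notin> Cbad z n \<and> \<omega> \<notin> Dbad z n" by auto
          from \<omega> obtain x t where x: "\<omega> \<in> space M" "x \<in> F \<inter> ball \<rho> r" "t \<in> {a..b}"
            and gt: "\<bar>\<beta> n * hk_q (Ed n) (w \<omega>) (nat \<lfloor>\<gamma> n * t\<rfloor>) \<rho> (g n x) - q t x\<bar> > \<epsilon>"
            unfolding C_def by blast
          from core[OF x(1) h x(2,3)] gt show False by simp
        qed
      qed
      have Csets: "\<And>z. Cbad z n \<in> sets M"
      proof -
        fix z
        have [measurable]: "(\<lambda>\<omega>. gmeasure (V n) (Ed n) (w \<omega>) (ball z \<delta>)) \<in> borel_measurable M"
          by (rule Gmeas[OF n1])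
        show "Cbad z n \<in> sets M" unfolding Cbad_def by measurable
      qed
      have Dsets: "\<And>z. Dbad z n \<in> sets M"
      proof -
        fix z
        show "Dbad z n \<in> sets M" unfolding Dbad_def
        proof (rule sets_ex_time[where f="\<lambda>k \<omega>. walk_prob (Ed n) (w \<omega>) k \<rho> (ball z \<delta>)"
              and h="\<lambda>t. nat \<lfloor>\<gamma> n * t\<rfloor>" and P="\<lambda>t p. ed z < \<bar>p - (LINT y:(ball z \<delta> \<inter> F)|\<nu>. q t y)\<bar>"])
          show "\<And>k. (\<lambda>\<omega>. walk_prob (Ed n) (w \<omega>) k \<rho> (ball z \<delta>)) \<in> borel_measurable M"
            by (rule Wmeas[OF n1])
          show "finite ((\<lambda>t. nat \<lfloor>\<gamma> n * t\<rfloor>) ` {a..b+1})" by (rule finite_floor_image[OF gamma_nonneg])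
          show "\<And>t. open {p. ed z < \<bar>p - (LINT y:(ball z \<delta> \<inter> F)|\<nu>. q t y)\<bar>}"
            by (intro open_Collect_less continuous_intros)
        qed
      qed
      have Asets: "Abad \<delta>' n \<in> sets M"
      proof -
        define G where "G = gball (V n) (Ed n) \<rho> (\<alpha> n * s)"
        have fG: "finite G" unfolding G_def by (rule gbfin[OF n1])
        have eq: "Abad \<delta>' n = (\<Union>x\<in>G. \<Union>y\<in>{y\<in>G. gdist (V n) (Ed n) x y \<le> \<alpha> n * \<delta>'}.
            {\<omega> \<in> space M. \<exists>t\<in>{a..b}. \<epsilon> / 10 < \<beta> n * \<bar>hk_q (Ed n) (w \<omega>) (nat \<lfloor>\<gamma> n * t\<rfloor>) \<rho> x
                    - hk_q (Ed n) (w \<omega>) (nat \<lfloor>\<gamma> n * t\<rfloor>) \<rho> y\<bar>})"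
          unfolding Abad_def G_def by blast
        have "\<And>x y. {\<omega> \<in> space M. \<exists>t\<in>{a..b}. \<epsilon> / 10 < \<beta> n * \<bar>hk_q (Ed n) (w \<omega>) (nat \<lfloor>\<gamma> n * t\<rfloor>) \<rho> x
                    - hk_q (Ed n) (w \<omega>) (nat \<lfloor>\<gamma> n * t\<rfloor>) \<rho> y\<bar>} \<in> sets M"
        proof -
          fix x y
          show "?thesis x y"
          proof (rule sets_ex_time[where f="\<lambda>k \<omega>. \<beta> n * \<bar>hk_q (Ed n) (w \<omega>) k \<rho> x - hk_q (Ed n) (w \<omega>) k \<rho> y\<bar>"
              and h="\<lambda>t. nat \<lfloor>\<gamma> n * t\<rfloor>" and P="\<lambda>t p. \<epsilon> / 10 < p"])
            fix k
            have [measurable]: "(\<lambda>\<omega>. hk_q (Ed n) (w \<omega>) k \<rho> x) \<in> borel_measurable M"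
              "(\<lambda>\<omega>. hk_q (Ed n) (w \<omega>) k \<rho> y) \<in> borel_measurable M" by (rule Qmeas[OF n1])+
            show "(\<lambda>\<omega>. \<beta> n * \<bar>hk_q (Ed n) (w \<omega>) k \<rho> x - hk_q (Ed n) (w \<omega>) k \<rho> y\<bar>) \<in> borel_measurable M"
              by measurable
          next
            show "finite ((\<lambda>t. nat \<lfloor>\<gamma> n * t\<rfloor>) ` {a..b})" by (rule finite_floor_image[OF gamma_nonneg])
          next
            show "\<And>t. open {p. \<epsilon> / 10 < p}" by (intro open_Collect_less continuous_intros)
          qed
        qed
        then show ?thesis unfolding eq using fG by (intro sets.finite_UN) auto
      qed
      show "measure M (C n) < \<eta>"
      proof (cases "C n \<in> sets M")
        case False
        then show ?thesis using eta by (simp add: measure_notin_sets)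
      next
        case True
        have U: "(\<Union>z\<in>Z. Cbad z n \<union> Dbad z n) \<in> sets M" using Z(2) Csets Dsets by auto
        have "measure M (C n) \<le> measure M (Abad \<delta>' n \<union> (\<Union>z\<in>Z. Cbad z n \<union> Dbad z n))"
          using incl Asets U by (intro P.finite_measure_mono) auto
        also have "\<dots> \<le> measure M (Abad \<delta>' n) + measure M (\<Union>z\<in>Z. Cbad z n \<union> Dbad z n)"
          using Asets U by (intro measure_subadditive) (simp_all add: P.emeasure_eq_measure)
        also have "measure M (\<Union>z\<in>Z. Cbad z n \<union> Dbad z n) \<le> (\<Sum>z\<in>Z. measure M (Cbad z n \<union> Dbad z n))"
          using Z(2) Csets Dsets by (intro P.finite_measure_subadditive_finite) auto
        also have "\<dots> \<le> (\<Sum>z\<in>Z. measure M (Cbad z n) + measure M (Dbad z n))"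
          using Csets Dsets by (intro sum_mono measure_subadditive) (simp_all add: P.emeasure_eq_measure)
        finally show ?thesis using elim by simp
      qed
    qed
  qed
  have "(\<lambda>n. measure M (C n)) \<longlonglongrightarrow> 0"
  proof (rule order_tendstoI)
    fix y :: real assume "y < 0"
    then show "eventually (\<lambda>n. y < measure M (C n)) sequentially"
      by (intro always_eventually) (auto intro: less_le_trans[OF _ measure_nonneg])
  next
    fix y :: real assume "y > 0"
    then show "eventually (\<lambda>n. measure M (C n) < y) sequentially" by (rule main)
  qed
  then show ?thesis unfolding C_def .
qed
end
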